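(* Let $q\in\mathbb{C}$ with $0<|q|<1$, and let $a,b,c,d,e$ be complex numbers such that at least one of $a$, $b$, $c$ is of the form $q^n$ with $n\in\{1,2,\ldots\}$ (and such that all terms below are well defined). Then \[ \sum_{k=-\infty}^\infty \frac{(q/a,q/b,q/c,q/d,q/e)_k}{(a,b,c,d,e)_k}(abcdeq^{-3})^k =\frac{(q,ab/q,bc/q,ac/q)_\infty}{(a,b,c,abc/q^2)_\infty} \sum_{k=0}^\infty\frac{(q/a,q/b,q/c,de/q)_k}{(q,q^3/abc,d,e)_k}q^k, \] and \[ \sum_{k=-\infty}^\infty \frac{(q/a,q/b,q/c,q/d,q/e)_k}{(aq,bq,cq,dq,eq)_k}(abcdeq^{-1})^k =\frac{(q,ab,bc,ac)_\infty}{(aq,bq,cq,abc/q)_\infty} \sum_{k=0}^\infty\frac{(q/a,q/b,q/c,de)_k}{(q,q^2/abc,dq,eq)_k}q^k. \]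
   Context: For an integer $n$, the $q$-shifted factorial is $(a)_n=(a;q)_n$ with $(a)_0=1$, $(a)_n=(1-a)(1-aq)\cdots(1-aq^{n-1})$ for $n\ge1$, and $(a)_n=[(1-aq^{-1})(1-aq^{-2})\cdots(1-aq^{n})]^{-1}$ for $n\le -1$. In particular $1/(q)_n=0$ for $n<0$. Also $(a_1,\ldots,a_m)_n=(a_1)_n\cdots(a_m)_n$ and $(a_1,\ldots,a_m)_\infty=\lim_{n\to\infty}(a_1,\ldots,a_m)_n$. *)

theory Defs
  imports "HOL-Analysis.Analysis"
begin

definition qpoch :: "complex \<Rightarrow> complex \<Rightarrow> int \<Rightarrow> complex" where
  "qpoch a q n =
     (if n \<ge> 0 then (\<Prod>j<nat n. (1 - a * q ^ j))
      else 1 / (\<Prod>j\<in>{1..nat (- n)}. (1 - a / q ^ j)))"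

definition qpoch_inf :: "complex \<Rightarrow> complex \<Rightarrow> complex" where
  "qpoch_inf a q = lim (\<lambda>n::nat. qpoch a q (int n))"

end

theory Submission
  imports Defs
begin

definition qp :: "complex \<Rightarrow> complex \<Rightarrow> nat \<Rightarrow> complex" where
  "qp q x n = (\<Prod>j<n. 1 - x * q ^ j)"

lemma qpoch_nat: "qpoch x q (int n) = qp q x n"
  by (simp add: qpoch_def qp_def)

lemma qp_0[simp]: "qp q x 0 = 1"
  by (simp add: qp_def)

lemma qp_Suc: "qp q x (Suc n) = qp q x n * (1 - x * q ^ n)"
  by (simp add: qp_def)

lemma qp_add: "qp q x (m + n) = qp q x m * qp q (x * q ^ m) n"
proof (induction n)
  case 0 then show ?case by simp
next
  case (Suc n) then show ?case by (simp add: qp_Suc power_add mult_ac)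
qed

lemma qp_Suc': "qp q x (Suc n) = (1 - x) * qp q (x * q) n"
  using qp_add[of q x 1 n] by (simp add: qp_def)

lemma qp_zero: "x * q ^ j = 1 \<Longrightarrow> j < n \<Longrightarrow> qp q x n = 0"
  unfolding qp_def by (rule prod_zero) auto

lemma qp_nz: "(\<And>j. j < n \<Longrightarrow> x * q ^ j \<noteq> 1) \<Longrightarrow> qp q x n \<noteq> 0"
  unfolding qp_def by (auto simp: prod_zero_iff)

lemma qp_nz_iff: "qp q x n \<noteq> 0 \<longleftrightarrow> (\<forall>j<n. x * q ^ j \<noteq> 1)"
  unfolding qp_def by (auto simp: prod_zero_iff)

definition T :: "complex \<Rightarrow> nat \<Rightarrow> complex" where
  "T q n = (\<Prod>i<n. q ^ i)"

lemma T_Suc: "T q (Suc n) = T q n * q ^ n"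
  by (simp add: T_def)

lemma T_nz: "q \<noteq> 0 \<Longrightarrow> T q n \<noteq> 0"
  by (simp add: T_def)

lemma T_sq: "T q n * T q n * q ^ n = q ^ (n * n)"
proof (induction n)
  case 0 then show ?case by (simp add: T_def)
next
  case (Suc n)
  have "T q (Suc n) * T q (Suc n) * q ^ Suc n = (T q n * T q n * q ^ n) * q ^ n * q ^ n * q"
    by (simp add: T_Suc mult_ac)
  also have "\<dots> = q ^ (n * n + n + n + 1)" using Suc by (simp add: power_add)
  also have "n * n + n + n + 1 = Suc n * Suc n" by simp
  finally show ?case .
qed

lemma qp_rev:
  assumes "q \<noteq> 0" "w \<noteq> 0" "x * w * q ^ j = q"
  shows "qp q x j = (-1/w) ^ j / T q j * qp q w j"
  using assms(3)
proof (induction j arbitrary: x)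
  case 0 then show ?case by (simp add: T_def)
next
  case (Suc j)
  have h: "(x * q) * w * q ^ j = q" using Suc.prems by (simp add: mult_ac)
  have x: "x = 1 / (w * q ^ j)" using Suc.prems assms(1,2)
    by (simp add: field_simps)
  have "qp q x (Suc j) = (1 - x) * qp q (x * q) j" by (rule qp_Suc')
  also have "\<dots> = (1 - x) * ((-1/w) ^ j / T q j * qp q w j)" using Suc.IH[OF h] by simp
  also have "\<dots> = (-1/w) ^ Suc j / T q (Suc j) * qp q w (Suc j)"
    unfolding qp_Suc T_Suc x using assms(1,2) T_nz[OF assms(1), of j]
    by (simp add: field_simps)
  finally show ?case .
qed

definition W :: "complex \<Rightarrow> complex \<Rightarrow> nat \<Rightarrow> complex" where
  "W q a k = (if k = 0 then 1 else (1 - a * q ^ (2 * k)) * qp q (a * q) (k - 1))"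

lemma W_0[simp]: "W q a 0 = 1" by (simp add: W_def)
lemma W_Suc: "W q a (Suc k) = (1 - a * q ^ (2 * Suc k)) * qp q (a * q) k" by (simp add: W_def)

lemma W_shift: "W q a (j + m) * qp q (a * q ^ (j + m)) j = qp q (a * q) (2 * j) * W q (a * q ^ (2 * j)) m"
proof (cases j)
  case 0 then show ?thesis by simp
next
  case (Suc j')
  have e1: "j + m = Suc (j' + m)" using Suc by simp
  have A0: "a * q * q ^ (j' + m) = a * q ^ (j + m)" using e1 by (simp add: mult_ac)
  have A: "qp q (a * q) (j' + m) * qp q (a * q ^ (j + m)) j = qp q (a * q) (j' + m + j)"
    by (simp only: qp_add A0)
  have e2: "j' + m + j = Suc (2 * j') + m" using Suc by simp
  have B0: "a * q * q ^ Suc (2 * j') = a * q ^ (2 * j)" using Suc by (simp add: mult_ac)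
  have B: "qp q (a * q) (Suc (2 * j') + m) = qp q (a * q) (Suc (2 * j')) * qp q (a * q ^ (2 * j)) m"
    by (simp only: qp_add B0)
  have C: "qp q (a * q) (2 * j) = qp q (a * q) (Suc (2 * j')) * (1 - a * q ^ (2 * j))"
  proof -
    have "2 * j = Suc (Suc (2 * j'))" using Suc by simp
    then show ?thesis using B0 by (simp only: qp_Suc)
  qed
  have LHS: "W q a (j + m) * qp q (a * q ^ (j + m)) j
        = (1 - a * q ^ (2 * (j + m))) * (qp q (a * q) (Suc (2 * j')) * qp q (a * q ^ (2 * j)) m)"
    using A B e2 by (simp add: e1 W_Suc mult_ac)
  show ?thesis
  proof (cases m)
    case 0
    then show ?thesis unfolding LHS C by simp
  next
    case (Suc m')
    have D: "qp q (a * q ^ (2 * j)) m = (1 - a * q ^ (2 * j)) * qp q (a * q ^ (2 * j) * q) m'"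
      using Suc by (simp add: qp_Suc')
    have E: "W q (a * q ^ (2 * j)) m = (1 - a * q ^ (2 * (j + m))) * qp q (a * q ^ (2 * j) * q) m'"
      using Suc by (simp add: W_Suc power_add mult_ac)
    show ?thesis unfolding LHS C D E by (simp add: mult_ac)
  qed
qed

lemma qq_nz:
  fixes q :: complex
  assumes "norm q < 1" "q \<noteq> 0"
  shows "q ^ Suc i \<noteq> 1"
proof
  assume "q ^ Suc i = 1"
  then have "norm (q ^ Suc i) = 1" by simp
  moreover have "norm (q ^ Suc i) < 1"
    unfolding norm_power using assms by (intro power_Suc_less_one) auto
  ultimately show False by simp
qed

lemma qp_q_nz:
  assumes "norm q < 1" "q \<noteq> 0"
  shows "qp q q n \<noteq> 0"
  using qq_nz[OF assms] by (intro qp_nz) (metis power_Suc)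

lemma unit_alg0:
  fixes X Y Q Z u vv Sm a q E1 E2 :: complex
  assumes "Q \<noteq> 0" "Z \<noteq> 0" "E1 \<noteq> 0" "E2 \<noteq> 0" "vv \<noteq> 0" "E1 = 1 - q * u" "E2 = 1 - a * q * vv * u"
  shows "X*Y*Sm/(Q*Z) + (1 - a*q^2*u^2)*X*((1-1/ vv)*Y)*(Sm* vv) / ((Q*E1)*(Z*E2))
       = (X*(1-a*q*u))*(Y*(1-q/ vv*u))*(Sm* vv)/((Q*E1)*(Z*E2))"
  using assms(1-5) apply (simp add: field_simps)
  apply (simp add: assms(6,7) algebra_simps power2_eq_square)
  done

lemma unit_alg:
  fixes X Y Q Z u vv Sm a q :: complex
  assumes "Q \<noteq> 0" "Z \<noteq> 0" "1 - q * u \<noteq> 0" "1 - a * q * vv * u \<noteq> 0" "vv \<noteq> 0"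
  shows "X*Y*Sm/(Q*Z) + (1 - a*q^2*u^2)*X*((1-1/ vv)*Y)*(Sm* vv) / ((Q*(1-q*u))*(Z*(1-a*q* vv*u)))
       = (X*(1-a*q*u))*(Y*(1-q/ vv*u))*(Sm* vv)/((Q*(1-q*u))*(Z*(1-a*q* vv*u)))"
  by (rule unit_alg0[OF assms refl refl])

lemma unit_partial:
  assumes q: "q \<noteq> 0" and Q: "\<And>n. qp q q n \<noteq> 0"
    and Z: "\<And>i. a * q ^ (N + 1) * q ^ i \<noteq> 1"
  shows "(\<Sum>k\<le>m. W q a k * qp q (1 / q ^ N) k * q ^ (N * k) / (qp q q k * qp q (a * q ^ (N + 1)) k))
     = qp q (a * q) m * qp q (q / q ^ N) m * q ^ (N * m) / (qp q q m * qp q (a * q ^ (N + 1)) m)"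
proof (induction m)
  case 0 then show ?case by simp
next
  case (Suc m)
  have Zm: "qp q (a * q ^ (N + 1)) m \<noteq> 0" using Z by (intro qp_nz) auto
  have Z1: "1 - a * q ^ (N + 1) * q ^ m \<noteq> 0" using Z[of m] by simp
  have Qm: "qp q q m \<noteq> 0" by (rule Q)
  have Q1: "1 - q * q ^ m \<noteq> 0" using Q[of "Suc m"] by (simp add: qp_Suc)
  have e1: "qp q (1 / q ^ N) (Suc m) = (1 - 1 / q ^ N) * qp q (q / q ^ N) m"
    by (simp add: qp_Suc')
  show ?case
    unfolding sum.atMost_Suc Suc.IH
    unfolding e1 W_Suc qp_Suc[of q "a*q"] qp_Suc[of q "q / q^N"] qp_Suc[of q q] qp_Suc[of q "a * q ^ (N + 1)"]
    using unit_alg[OF Qm Zm _ _ _, of q "q^m" a "q^N" "qp q (a * q) m" "qp q (q / q ^ N) m" "q^(N*m)"] Q1 Z1 q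
    by (simp add: power_add power_mult_distrib power_mult mult_ac power2_eq_square)
qed

lemma unit_full:
  assumes q: "q \<noteq> 0" and Q: "\<And>n. qp q q n \<noteq> 0"
    and Z: "\<And>i. a * q ^ (N + 1) * q ^ i \<noteq> 1" and N: "N \<ge> 1"
  shows "(\<Sum>k\<le>N. W q a k * qp q (1 / q ^ N) k * q ^ (N * k) / (qp q q k * qp q (a * q ^ (N + 1)) k)) = 0"
proof -
  have "qp q (q / q ^ N) N = 0"
  proof (rule qp_zero[of _ _ "N - 1"])
    show "q / q ^ N * q ^ (N - 1) = 1"
    proof -
      obtain M where M: "N = Suc M" using N by (cases N) auto
      show ?thesis using q by (simp add: M)
    qed
    show "N - 1 < N" using N by simp
  qed
  then show ?thesis unfolding unit_partial[OF q Q Z] by simp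
qed

definition Ssal :: "complex \<Rightarrow> nat \<Rightarrow> complex \<Rightarrow> complex \<Rightarrow> complex \<Rightarrow> complex \<Rightarrow> complex" where
  "Ssal q n A B C D = (\<Sum>k\<le>n. qp q (1 / q ^ n) k * qp q A k * qp q B k / (qp q q k * qp q C k * qp q D k) * q ^ k)"

definition Rsal :: "complex \<Rightarrow> nat \<Rightarrow> complex \<Rightarrow> complex \<Rightarrow> complex \<Rightarrow> complex" where
  "Rsal q n A B C = qp q (C / A) n * qp q (C / B) n / (qp q C n * qp q (C / (A * B)) n)"

lemma sal_atoms:
  fixes X PA PB Q PC PD q u e1 e2 e3 e4 e5 f1 f2 f3 g1 g2 :: complex
  assumes nz: "Q \<noteq> 0" "PC \<noteq> 0" "PD \<noteq> 0" "e1 \<noteq> 0" "e2 \<noteq> 0" "e3 \<noteq> 0" "e4 \<noteq> 0" "e5 \<noteq> 0"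
    and rel: "f1 * e5 - f2 * e3 = f3 * e1"
  shows "f1 * X * (g1 * PA) * (g2 * PB) / ((Q * e1) * (e2 * PC) * (e3 * (e4 * PD / e5))) * (q * u)
       - X * f2 * (g1 * PA) * (g2 * PB) / ((Q * e1) * (e2 * PC) * (e4 * PD)) * (q * u)
       = g1 * g2 * q * f3 / (e2 * e3 * e4) * (X * PA * PB / (Q * PC * PD) * u)"
proof -
  have f1: "f1 = (f3 * e1 + f2 * e3) / e5" using rel nz by (simp add: field_simps)
  show ?thesis unfolding f1 using nz by (simp add: field_simps)
qed

lemma nz_shift: "(\<And>i. x * q ^ i \<noteq> (1::complex)) \<Longrightarrow> (x * q) * q ^ i \<noteq> 1"
  by (metis mult.assoc power_Suc)

lemma sal_step:
  assumes q: "q \<noteq> 0" and Q: "\<And>n. qp q q n \<noteq> 0" and Cn: "\<And>i. C * q ^ i \<noteq> 1" and Dn: "\<And>i. D * q ^ i \<noteq> 1"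
  shows "Ssal q (Suc n) A B C D - Ssal q n A B C (D * q)
       = (1 - A) * (1 - B) * q * (D - 1 / (q ^ n * q)) / ((1 - C) * (1 - D) * (1 - D * q))
         * Ssal q n (A * q) (B * q) (C * q) (D * q * q)"
proof -
  define coef where "coef = (1 - A) * (1 - B) * q * (D - 1 / (q ^ n * q)) / ((1 - C) * (1 - D) * (1 - D * q))"
  define t1 where "t1 = (\<lambda>k. qp q (1 / q ^ Suc n) k * qp q A k * qp q B k / (qp q q k * qp q C k * qp q D k) * q ^ k)"
  define t2 where "t2 = (\<lambda>k. qp q (1 / q ^ n) k * qp q A k * qp q B k / (qp q q k * qp q C k * qp q (D * q) k) * q ^ k)"
  define s where "s = (\<lambda>i. qp q (1 / q ^ n) i * qp q (A * q) i * qp q (B * q) i / (qp q q i * qp q (C * q) i * qp q (D * q * q) i) * q ^ i)"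
  have z: "qp q (1 / q ^ n) (Suc n) = 0" by (rule qp_zero[of _ _ n]) (use q in auto)
  have S2: "Ssal q n A B C (D * q) = (\<Sum>k\<le>Suc n. t2 k)"
    unfolding Ssal_def t2_def by (simp add: z)
  have S1: "Ssal q (Suc n) A B C D = (\<Sum>k\<le>Suc n. t1 k)"
    unfolding Ssal_def t1_def by simp
  have S3: "Ssal q n (A * q) (B * q) (C * q) (D * q * q) = (\<Sum>i\<le>n. s i)"
    unfolding Ssal_def s_def by simp
  have tmeq: "t1 (Suc i) - t2 (Suc i) = coef * s i" for i
  proof -
    define u where "u = q ^ i"
    define vv where "vv = q ^ n"
    define X where "X = qp q (1 / q ^ n) i"
    define PA where "PA = qp q (A * q) i"
    define PB where "PB = qp q (B * q) i"
    define PC where "PC = qp q (C * q) i"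
    define PD where "PD = qp q (D * q * q) i"
    define QQ where "QQ = qp q q i"
    have Dq: "\<And>i. (D * q) * q ^ i \<noteq> 1" by (rule nz_shift[OF Dn])
    have Dqq: "\<And>i. (D * q * q) * q ^ i \<noteq> 1" by (rule nz_shift[OF Dq])
    have Cq: "\<And>i. (C * q) * q ^ i \<noteq> 1" by (rule nz_shift[OF Cn])
    have nPC: "PC \<noteq> 0" unfolding PC_def using Cq by (intro qp_nz) auto
    have nPD: "PD \<noteq> 0" unfolding PD_def using Dqq by (intro qp_nz) auto
    have nQ: "QQ \<noteq> 0" unfolding QQ_def by (rule Q)
    have ne1: "1 - q * u \<noteq> 0" using Q[of "Suc i"] by (simp add: qp_Suc u_def)
    have ne2: "1 - C \<noteq> 0" using Cn[of 0] by simp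
    have ne3: "1 - D \<noteq> 0" using Dn[of 0] by simp
    have ne4: "1 - D * q \<noteq> 0" using Dn[of 1] by simp
    have ne5: "1 - D * q * u \<noteq> 0" using Dn[of "Suc i"] by (simp add: u_def mult_ac)
    have nvv: "vv \<noteq> 0" using q by (simp add: vv_def)
    have E1: "qp q (1 / q ^ Suc n) (Suc i) = (1 - 1 / (vv * q)) * X"
    proof -
      have "1 / q ^ Suc n * q = 1 / q ^ n" using q by simp
      then show ?thesis unfolding qp_Suc' X_def vv_def by (simp add: mult.commute)
    qed
    have E2: "qp q A (Suc i) = (1 - A) * PA" unfolding PA_def by (rule qp_Suc')
    have E3: "qp q B (Suc i) = (1 - B) * PB" unfolding PB_def by (rule qp_Suc')
    have E4: "qp q q (Suc i) = QQ * (1 - q * u)" unfolding QQ_def u_def by (rule qp_Suc)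
    have E5: "qp q C (Suc i) = (1 - C) * PC" unfolding PC_def by (rule qp_Suc')
    have E9: "qp q (D * q) (Suc i) = (1 - D * q) * PD" unfolding PD_def by (rule qp_Suc')
    have E6: "qp q D (Suc i) = (1 - D) * ((1 - D * q) * PD / (1 - D * q * u))"
    proof -
      have "qp q (D * q) (Suc i) = qp q (D * q) i * (1 - D * q * u)" unfolding u_def by (rule qp_Suc)
      then have "qp q (D * q) i = (1 - D * q) * PD / (1 - D * q * u)" using E9 ne5 by (simp add: field_simps)
      then show ?thesis by (simp add: qp_Suc')
    qed
    have E7: "q ^ Suc i = q * u" unfolding u_def by simp
    have E8: "qp q (1 / q ^ n) (Suc i) = X * (1 - u / vv)" unfolding X_def u_def vv_def by (simp add: qp_Suc)
    have T1: "t1 (Suc i) = (1 - 1 / (vv * q)) * X * ((1 - A) * PA) * ((1 - B) * PB)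
           / ((QQ * (1 - q * u)) * ((1 - C) * PC) * ((1 - D) * ((1 - D * q) * PD / (1 - D * q * u)))) * (q * u)"
      unfolding t1_def by (simp only: E1 E2 E3 E4 E5 E6 E7)
    have T2: "t2 (Suc i) = X * (1 - u / vv) * ((1 - A) * PA) * ((1 - B) * PB)
           / ((QQ * (1 - q * u)) * ((1 - C) * PC) * ((1 - D * q) * PD)) * (q * u)"
      unfolding t2_def by (simp only: E8 E2 E3 E4 E5 E9 E7)
    have Sx: "s i = X * PA * PB / (QQ * PC * PD) * u"
      unfolding s_def X_def PA_def PB_def QQ_def PC_def PD_def u_def by simp
    have rel: "(1 - 1 / (vv * q)) * (1 - D * q * u) - (1 - u / vv) * (1 - D) = (D - 1 / (vv * q)) * (1 - q * u)"
      using q nvv by (simp add: field_simps)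
    have "t1 (Suc i) - t2 (Suc i) = (1 - A) * (1 - B) * q * (D - 1 / (vv * q)) / ((1 - C) * (1 - D) * (1 - D * q))
         * (X * PA * PB / (QQ * PC * PD) * u)"
      unfolding T1 T2 by (rule sal_atoms[OF nQ nPC nPD ne1 ne2 ne3 ne4 ne5 rel])
    then show ?thesis unfolding Sx coef_def vv_def by (simp add: mult.commute)
  qed
  have "Ssal q (Suc n) A B C D - Ssal q n A B C (D * q) = (\<Sum>k\<le>Suc n. t1 k - t2 k)"
    unfolding S1 S2 by (simp add: sum_subtractf)
  also have "\<dots> = (t1 0 - t2 0) + (\<Sum>i\<le>n. t1 (Suc i) - t2 (Suc i))"
    by (rule sum.atMost_Suc_shift)
  also have "t1 0 - t2 0 = 0" unfolding t1_def t2_def by simp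
  also have "(\<Sum>i\<le>n. t1 (Suc i) - t2 (Suc i)) = coef * (\<Sum>i\<le>n. s i)"
    by (simp add: tmeq sum_distrib_left)
  finally show ?thesis unfolding S3 coef_def by simp
qed

lemma rsal_atoms:
  fixes X Y Cn Zn H e1 e2 e3 e4 e5 e6 h3 c0 :: complex
  assumes nz: "Cn \<noteq> 0" "Zn \<noteq> 0" "e1 \<noteq> 0" "e2 \<noteq> 0" "e3 \<noteq> 0" "e4 \<noteq> 0" "e5 \<noteq> 0" "e6 \<noteq> 0" "h3 \<noteq> 0"
    and rel: "H * e5 * e6 * h3 = e1 * e2 * e5 * e6 * h3 + c0 * e4 * e2"
  shows "X * Y * H / (Cn * e1 * Zn * e2) = X * Y / (Cn * Zn) + c0 / (e3 * e5 * e6) * (X * Y / ((Cn * e1 / e3) * (h3 * Zn / e4)))"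
proof -
  have H: "H = (e1 * e2 * e5 * e6 * h3 + c0 * e4 * e2) / (e5 * e6 * h3)" using rel nz by (simp add: field_simps)
  show ?thesis unfolding H using nz by (simp add: field_simps)
qed

lemma rsal_rel:
  fixes A B C D q u :: complex
  assumes nz: "A \<noteq> 0" "B \<noteq> 0" "C \<noteq> 0" "q \<noteq> 0" "u \<noteq> 0" and D: "D = A * B / (C * u)"
  shows "((1 - C / A * u) * (1 - C / B * u)) * (1 - D) * (1 - D * q) * (1 - C / (A * B) / q)
       = (1 - C * u) * (1 - C / (A * B) * u) * (1 - D) * (1 - D * q) * (1 - C / (A * B) / q)
         + (1 - A) * (1 - B) * q * (D - 1 / (u * q)) * (1 - C / (A * B) / q * u) * (1 - C / (A * B) * u)"
  unfolding D using nz by (simp add: field_simps)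

lemma rsal_step:
  assumes q: "q \<noteq> 0" and nz: "A \<noteq> 0" "B \<noteq> 0" "C \<noteq> 0"
    and Cn: "\<And>i. C * q ^ i \<noteq> 1" and Dn: "\<And>i. D * q ^ i \<noteq> 1"
    and rel: "D * C * q ^ Suc n = A * B * q"
  shows "Rsal q (Suc n) A B C = Rsal q n A B C
       + (1 - A) * (1 - B) * q * (D - 1 / (q ^ n * q)) / ((1 - C) * (1 - D) * (1 - D * q)) * Rsal q n (A * q) (B * q) (C * q)"
proof -
  define u where "u = q ^ n"
  define x where "x = C / (A * B)"
  define X where "X = qp q (C / A) n"
  define Y where "Y = qp q (C / B) n"
  define Cn' where "Cn' = qp q C n"
  define Zn where "Zn = qp q x n"
  have nu: "u \<noteq> 0" using q by (simp add: u_def)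
  have AB: "A * B = D * C * u" using rel q by (simp add: u_def mult_ac)
  have Dv: "D = A * B / (C * u)" using AB nz nu by (simp add: field_simps)
  have nD: "D \<noteq> 0" using AB nz by auto
  have xv: "x = 1 / (D * u)" unfolding x_def AB using nz nD nu by (simp add: field_simps)
  have nCn: "Cn' \<noteq> 0" unfolding Cn'_def using Cn by (intro qp_nz) auto
  have nZn: "Zn \<noteq> 0" unfolding Zn_def
  proof (rule qp_nz)
    fix j assume j: "j < n"
    show "x * q ^ j \<noteq> 1"
    proof
      assume "x * q ^ j = 1"
      then have "q ^ j = D * u" unfolding xv using nD nu by (simp add: field_simps)
      also have "u = q ^ j * q ^ (n - j)" unfolding u_def using j by (simp add: power_add[symmetric])
      finally have "q ^ j * 1 = q ^ j * (D * q ^ (n - j))" by (simp add: mult_ac)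
      then have "D * q ^ (n - j) = 1" using q by simp
      then show False using Dn by blast
    qed
  qed
  have ne1: "1 - C * u \<noteq> 0" using Cn[of n] by (simp add: u_def)
  have ne3: "1 - C \<noteq> 0" using Cn[of 0] by simp
  have ne5: "1 - D \<noteq> 0" using Dn[of 0] by simp
  have ne6: "1 - D * q \<noteq> 0" using Dn[of 1] by simp
  have ne2: "1 - x * u \<noteq> 0" unfolding xv using ne5 nD nu by (simp add: field_simps)
  have nh3: "1 - x / q \<noteq> 0"
  proof
    assume "1 - x / q = 0"
    then have "D * q ^ Suc n = 1" unfolding xv u_def using nD q by (simp add: field_simps)
    then show False using Dn by blast
  qed
  have ne4: "1 - x / q * u \<noteq> 0" unfolding xv using ne6 nD nu q by (simp add: field_simps)
  have R1: "Rsal q (Suc n) A B C = X * Y * ((1 - C / A * u) * (1 - C / B * u)) / (Cn' * (1 - C * u) * Zn * (1 - x * u))"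
    unfolding Rsal_def X_def Y_def Cn'_def Zn_def x_def u_def by (simp add: qp_Suc mult_ac)
  have R0: "Rsal q n A B C = X * Y / (Cn' * Zn)"
    unfolding Rsal_def X_def Y_def Cn'_def Zn_def x_def by simp
  have Cq: "qp q (C * q) n = Cn' * (1 - C * u) / (1 - C)"
  proof -
    have "(1 - C) * qp q (C * q) n = Cn' * (1 - C * u)"
      unfolding Cn'_def u_def by (metis qp_Suc qp_Suc')
    then show ?thesis using ne3 by (simp add: field_simps)
  qed
  have xq: "qp q (x / q) n = (1 - x / q) * Zn / (1 - x / q * u)"
  proof -
    have "(1 - x / q) * qp q (x / q * q) n = qp q (x / q) n * (1 - x / q * u)"
      unfolding u_def by (metis qp_Suc qp_Suc')
    moreover have "x / q * q = x" using q by simp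
    ultimately have "qp q (x / q) n * (1 - x / q * u) = (1 - x / q) * Zn" unfolding Zn_def by simp
    then show ?thesis using ne4 by (simp add: eq_divide_eq)
  qed
  have Rq: "Rsal q n (A * q) (B * q) (C * q) = X * Y / ((Cn' * (1 - C * u) / (1 - C)) * ((1 - x / q) * Zn / (1 - x / q * u)))"
  proof -
    have e1: "C * q / (A * q) = C / A" "C * q / (B * q) = C / B" "C * q / (A * q * (B * q)) = x / q"
      using q unfolding x_def by (auto simp: field_simps)
    show ?thesis unfolding Rsal_def e1 Cq xq X_def Y_def by simp
  qed
  have rr: "((1 - C / A * u) * (1 - C / B * u)) * (1 - D) * (1 - D * q) * (1 - x / q)
       = (1 - C * u) * (1 - x * u) * (1 - D) * (1 - D * q) * (1 - x / q)
         + (1 - A) * (1 - B) * q * (D - 1 / (u * q)) * (1 - x / q * u) * (1 - x * u)"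
    unfolding x_def by (rule rsal_rel[OF nz q nu Dv])
  show ?thesis
    unfolding R1 R0 Rq
    using rsal_atoms[OF nCn nZn ne1 ne2 ne3 ne4 ne5 ne6 nh3 rr, of X Y]
    by (simp add: u_def mult.commute)
qed

lemma sal_main:
  assumes q: "q \<noteq> 0" and Q: "\<And>n. qp q q n \<noteq> 0"
  shows "A \<noteq> 0 \<Longrightarrow> B \<noteq> 0 \<Longrightarrow> C \<noteq> 0 \<Longrightarrow> (\<And>i. C * q ^ i \<noteq> 1) \<Longrightarrow> (\<And>i. D * q ^ i \<noteq> 1)
    \<Longrightarrow> D * C * q ^ n = A * B * q \<Longrightarrow> Ssal q n A B C D = Rsal q n A B C"
proof (induction n arbitrary: A B C D)
  case 0
  then show ?case by (simp add: Ssal_def Rsal_def)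
next
  case (Suc n)
  have Dq: "\<And>i. (D * q) * q ^ i \<noteq> 1" by (rule nz_shift[OF Suc.prems(5)])
  have Dqq: "\<And>i. (D * q * q) * q ^ i \<noteq> 1" by (rule nz_shift[OF Dq])
  have Cq: "\<And>i. (C * q) * q ^ i \<noteq> 1" by (rule nz_shift[OF Suc.prems(4)])
  have r1: "(D * q) * C * q ^ n = A * B * q" using Suc.prems(6) by (simp add: mult_ac)
  have r2: "(D * q * q) * (C * q) * q ^ n = (A * q) * (B * q) * q" using Suc.prems(6) by (simp add: mult_ac)
  have I1: "Ssal q n A B C (D * q) = Rsal q n A B C"
    by (rule Suc.IH[OF Suc.prems(1-4) Dq r1])
  have I2: "Ssal q n (A * q) (B * q) (C * q) (D * q * q) = Rsal q n (A * q) (B * q) (C * q)"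
    by (rule Suc.IH) (use Suc.prems q Cq Dqq r2 in auto)
  have st: "Ssal q (Suc n) A B C D - Ssal q n A B C (D * q)
       = (1 - A) * (1 - B) * q * (D - 1 / (q ^ n * q)) / ((1 - C) * (1 - D) * (1 - D * q))
         * Ssal q n (A * q) (B * q) (C * q) (D * q * q)"
    by (rule sal_step[OF q Q Suc.prems(4,5)])
  show ?case
    using st unfolding I1 I2 rsal_step[OF q Suc.prems(1-5) Suc.prems(6)]
    by (simp add: algebra_simps)
qed

lemma sal_used:
  assumes q: "q \<noteq> 0" and Q: "\<And>n. qp q q n \<noteq> 0" and nz: "a \<noteq> 0" "b \<noteq> 0" "c \<noteq> 0"
    and hb: "\<And>i. a * q / b * q ^ i \<noteq> 1" and hc: "\<And>i. a * q / c * q ^ i \<noteq> 1"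
  shows "(\<Sum>j\<le>k. qp q (1 / q ^ k) j * qp q (a * q ^ k) j * qp q (a * q / (b * c)) j
            / (qp q q j * qp q (a * q / b) j * qp q (a * q / c) j) * q ^ j)
       = qp q b k * qp q c k / (qp q (a * q / b) k * qp q (a * q / c) k) * (a * q / (b * c)) ^ k"
proof -
  have "(\<Sum>j\<le>k. qp q (1 / q ^ k) j * qp q (a * q ^ k) j * qp q (a * q / (b * c)) j
            / (qp q q j * qp q (a * q / b) j * qp q (a * q / c) j) * q ^ j)
      = Ssal q k (a * q ^ k) (a * q / (b * c)) (a * q / b) (a * q / c)"
    unfolding Ssal_def ..
  also have "\<dots> = Rsal q k (a * q ^ k) (a * q / (b * c)) (a * q / b)"
    by (rule sal_main[OF q Q]) (use nz q hb hc in \<open>auto simp: field_simps\<close>)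
  also have "\<dots> = qp q b k * qp q c k / (qp q (a * q / b) k * qp q (a * q / c) k) * (a * q / (b * c)) ^ k"
  proof -
    have e1: "a * q / b / (a * q ^ k) = 1 / (b * q ^ k) * q" using q nz by (simp add: field_simps power_Suc)
    have r1: "qp q (a * q / b / (a * q ^ k)) k = (-1 / b) ^ k / T q k * qp q b k"
      by (rule qp_rev[OF q nz(2)]) (use q nz in \<open>simp add: field_simps\<close>)
    have e2: "a * q / b / (a * q / (b * c)) = c" using q nz by (simp add: field_simps)
    have r3: "qp q (a * q / b / (a * q ^ k * (a * q / (b * c)))) k = (-1 / (a * q / c)) ^ k / T q k * qp q (a * q / c) k"
      by (rule qp_rev[OF q]) (use q nz in \<open>simp_all add: field_simps\<close>)
    have nT: "T q k \<noteq> 0" by (rule T_nz[OF q])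
    have nC: "qp q (a * q / c) k \<noteq> 0" using hc by (intro qp_nz) auto
    have pw: "(-1 / b) ^ k / (-1 / (a * q / c)) ^ k = (a * q / (b * c)) ^ k"
      by (simp add: power_divide[symmetric])
    show ?thesis unfolding Rsal_def r1 e2 r3
      using nT nC pw[symmetric] by (simp add: field_simps)
  qed
  finally show ?thesis .
qed

lemma tri_swap:
  fixes f :: "nat \<Rightarrow> nat \<Rightarrow> complex"
  shows "(\<Sum>k\<le>N. \<Sum>j\<le>k. f k j) = (\<Sum>j\<le>N. \<Sum>m\<le>N - j. f (j + m) j)"
proof (induction N)
  case 0 then show ?case by simp
next
  case (Suc N)
  have "(\<Sum>j\<le>Suc N. \<Sum>m\<le>Suc N - j. f (j + m) j)
      = (\<Sum>j\<le>N. \<Sum>m\<le>Suc N - j. f (j + m) j) + f (Suc N) (Suc N)"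
    by simp
  also have "(\<Sum>j\<le>N. \<Sum>m\<le>Suc N - j. f (j + m) j) = (\<Sum>j\<le>N. (\<Sum>m\<le>N - j. f (j + m) j) + f (Suc N) j)"
  proof (rule sum.cong[OF refl])
    fix j assume "j \<in> {..N}"
    then have j: "j \<le> N" by simp
    then have "Suc N - j = Suc (N - j)" by simp
    then show "(\<Sum>m\<le>Suc N - j. f (j + m) j) = (\<Sum>m\<le>N - j. f (j + m) j) + f (Suc N) j"
      using j by simp
  qed
  also have "\<dots> = (\<Sum>j\<le>N. \<Sum>m\<le>N - j. f (j + m) j) + (\<Sum>j\<le>N. f (Suc N) j)"
    by (rule sum.distrib)
  finally show ?case using Suc by simp
qed

lemma rev_qk:
  assumes q: "q \<noteq> 0" and Q: "\<And>n. qp q q n \<noteq> 0"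
  shows "qp q (1 / q ^ (j + m)) j / qp q q (j + m) = (-1 / q ^ (m + 1)) ^ j / (T q j * qp q q m)"
proof -
  have r: "qp q (1 / q ^ (j + m)) j = (-1 / q ^ (m + 1)) ^ j / T q j * qp q (q ^ (m + 1)) j"
    by (rule qp_rev[OF q]) (use q in \<open>simp_all add: power_add\<close>)
  have a: "qp q q (j + m) = qp q q m * qp q (q ^ (m + 1)) j"
    by (subst add.commute) (simp add: qp_add mult.commute)
  have nz: "qp q (q ^ (m + 1)) j \<noteq> 0" using Q[of "j + m"] a by auto
  show ?thesis unfolding r a using nz Q[of m] T_nz[OF q, of j] by (simp add: field_simps)
qed

lemma inv_pow:
  assumes "(q::complex) \<noteq> 0" "j \<le> N" shows "1 / q ^ N * q ^ j = 1 / q ^ (N - j)"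
proof -
  have "q ^ N = q ^ j * q ^ (N - j)" using assms(2) by (simp add: power_add[symmetric])
  then show ?thesis using assms(1) by (simp add: field_simps)
qed

lemma inner6:
  assumes q: "q \<noteq> 0" and Q: "\<And>n. qp q q n \<noteq> 0" and jm: "j + m \<le> N"
  shows "W q a (j + m) / qp q q (j + m) * qp q (1 / q ^ N) (j + m) * q ^ (N * (j + m))
           / qp q (a * q ^ (N + 1)) (j + m) * (qp q (1 / q ^ (j + m)) j * qp q (a * q ^ (j + m)) j)
       = (qp q (a * q) (2 * j) * qp q (1 / q ^ N) j * q ^ (N * j) * (-1 / q) ^ j / (T q j * qp q (a * q ^ (N + 1)) j))
         * (W q (a * q ^ (2 * j)) m * qp q (1 / q ^ (N - j)) m * q ^ ((N - j) * m)
             / (qp q q m * qp q (a * q ^ (2 * j) * q ^ (N - j + 1)) m))"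
proof -
  have j: "j \<le> N" using jm by simp
  have i1: "W q a (j + m) * qp q (a * q ^ (j + m)) j = qp q (a * q) (2 * j) * W q (a * q ^ (2 * j)) m"
    by (rule W_shift)
  have i2: "qp q (1 / q ^ (j + m)) j / qp q q (j + m) = (-1 / q ^ (m + 1)) ^ j / (T q j * qp q q m)"
    by (rule rev_qk[OF q Q])
  have i3: "qp q (1 / q ^ N) (j + m) = qp q (1 / q ^ N) j * qp q (1 / q ^ (N - j)) m"
    by (simp only: qp_add inv_pow[OF q j])
  have e4: "a * q ^ (N + 1) * q ^ j = a * q ^ (2 * j) * q ^ (N - j + 1)"
    using j by (simp add: power_add[symmetric] mult.assoc add.commute)
  have i4: "qp q (a * q ^ (N + 1)) (j + m) = qp q (a * q ^ (N + 1)) j * qp q (a * q ^ (2 * j) * q ^ (N - j + 1)) m"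
    by (simp only: qp_add e4)
  have i5: "q ^ (N * (j + m)) * (-1 / q ^ (m + 1)) ^ j = q ^ (N * j) * (-1 / q) ^ j * q ^ ((N - j) * m)"
  proof -
    have ex: "N * (j + m) = N * j + (N - j) * m + j * m"
    proof -
      obtain d where "N = j + d" using j le_Suc_ex by blast
      then show ?thesis by (simp add: algebra_simps)
    qed
    have "q ^ (N * (j + m)) = q ^ (N * j) * q ^ ((N - j) * m) * q ^ (j * m)"
      by (simp only: ex power_add)
    moreover have "(-1 / q ^ (m + 1)) ^ j = (-1 / q) ^ j / q ^ (j * m)"
    proof -
      have "-1 / q ^ (m + 1) = (-1 / q) * (1 / q ^ m)" by simp
      then have "(-1 / q ^ (m + 1)) ^ j = (-1 / q) ^ j * (1 / q ^ m) ^ j" by (simp only: power_mult_distrib)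
      also have "(1 / q ^ m) ^ j = 1 / q ^ (j * m)" by (simp add: power_one_over power_mult[symmetric] mult.commute)
      finally show ?thesis by simp
    qed
    ultimately show ?thesis using q by (simp add: field_simps)
  qed
  have "W q a (j + m) / qp q q (j + m) * qp q (1 / q ^ N) (j + m) * q ^ (N * (j + m))
           / qp q (a * q ^ (N + 1)) (j + m) * (qp q (1 / q ^ (j + m)) j * qp q (a * q ^ (j + m)) j)
      = (W q a (j + m) * qp q (a * q ^ (j + m)) j) * (qp q (1 / q ^ (j + m)) j / qp q q (j + m))
        * qp q (1 / q ^ N) (j + m) * q ^ (N * (j + m)) / qp q (a * q ^ (N + 1)) (j + m)"
    by (simp add: divide_inverse mult_ac)
  also have "\<dots> = (qp q (a * q) (2 * j) * W q (a * q ^ (2 * j)) m) * ((-1 / q ^ (m + 1)) ^ j / (T q j * qp q q m))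
        * (qp q (1 / q ^ N) j * qp q (1 / q ^ (N - j)) m) * q ^ (N * (j + m))
        / (qp q (a * q ^ (N + 1)) j * qp q (a * q ^ (2 * j) * q ^ (N - j + 1)) m)"
    unfolding i1 i2 i3 i4 ..
  also have "\<dots> = (qp q (a * q) (2 * j) * W q (a * q ^ (2 * j)) m) / (T q j * qp q q m)
        * (qp q (1 / q ^ N) j * qp q (1 / q ^ (N - j)) m) * (q ^ (N * (j + m)) * (-1 / q ^ (m + 1)) ^ j)
        / (qp q (a * q ^ (N + 1)) j * qp q (a * q ^ (2 * j) * q ^ (N - j + 1)) m)"
    by (simp add: divide_inverse mult_ac)
  also have "\<dots> = (qp q (a * q) (2 * j) * qp q (1 / q ^ N) j * q ^ (N * j) * (-1 / q) ^ j / (T q j * qp q (a * q ^ (N + 1)) j))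
         * (W q (a * q ^ (2 * j)) m * qp q (1 / q ^ (N - j)) m * q ^ ((N - j) * m)
             / (qp q q m * qp q (a * q ^ (2 * j) * q ^ (N - j + 1)) m))"
    unfolding i5 by (simp add: divide_inverse mult_ac)
  finally show ?thesis .
qed

lemma sq_cancel: "(q::complex) \<noteq> 0 \<Longrightarrow> (-1 / q) ^ N * (-1 / q) ^ N * q ^ N * q ^ N = 1"
proof -
  assume q: "q \<noteq> 0"
  have "(-1 / q) ^ N * (-1 / q) ^ N * q ^ N * q ^ N = ((-1 / q) * (-1 / q) * q * q) ^ N"
    by (simp only: power_mult_distrib)
  also have "(-1 / q) * (-1 / q) * q * q = 1" using q by simp
  finally show ?thesis by simp
qed

lemma sixW5:
  assumes q: "q \<noteq> 0" and Q: "\<And>n. qp q q n \<noteq> 0" and nz: "a \<noteq> 0" "b \<noteq> 0" "c \<noteq> 0"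
    and Ga: "\<And>i. a * q ^ Suc i \<noteq> 1"
    and hb: "\<And>i. a * q / b * q ^ i \<noteq> 1" and hc: "\<And>i. a * q / c * q ^ i \<noteq> 1"
  shows "(\<Sum>k\<le>N. W q a k / qp q q k * (qp q b k * qp q c k * qp q (1 / q ^ N) k)
            / (qp q (a * q / b) k * qp q (a * q / c) k * qp q (a * q ^ (N + 1)) k) * (a * q ^ (N + 1) / (b * c)) ^ k)
       = qp q (a * q) N * qp q (a * q / (b * c)) N / (qp q (a * q / b) N * qp q (a * q / c) N)"
proof -
  define F where "F k = W q a k / qp q q k * qp q (1 / q ^ N) k * q ^ (N * k) / qp q (a * q ^ (N + 1)) k" for k
  define Bk where "Bk k = qp q b k * qp q c k / (qp q (a * q / b) k * qp q (a * q / c) k) * (a * q / (b * c)) ^ k" for k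
  define G where "G k j = qp q (1 / q ^ k) j * qp q (a * q ^ k) j * qp q (a * q / (b * c)) j
            / (qp q q j * qp q (a * q / b) j * qp q (a * q / c) j) * q ^ j" for k j
  define L where "L j = qp q (a * q / (b * c)) j / (qp q q j * qp q (a * q / b) j * qp q (a * q / c) j) * q ^ j" for j
  define C where "C j = qp q (a * q) (2 * j) * qp q (1 / q ^ N) j * q ^ (N * j) * (-1 / q) ^ j / (T q j * qp q (a * q ^ (N + 1)) j)" for j
  define U where "U j m = W q (a * q ^ (2 * j)) m * qp q (1 / q ^ (N - j)) m * q ^ ((N - j) * m)
             / (qp q q m * qp q (a * q ^ (2 * j) * q ^ (N - j + 1)) m)" for j m
  have s1: "W q a k / qp q q k * (qp q b k * qp q c k * qp q (1 / q ^ N) k)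
            / (qp q (a * q / b) k * qp q (a * q / c) k * qp q (a * q ^ (N + 1)) k) * (a * q ^ (N + 1) / (b * c)) ^ k
         = F k * Bk k" for k
  proof -
    have eq: "a * q ^ (N + 1) / (b * c) = q ^ N * (a * q / (b * c))" by (simp add: mult_ac)
    have pw: "(a * q ^ (N + 1) / (b * c)) ^ k = q ^ (N * k) * (a * q / (b * c)) ^ k"
      by (simp only: eq power_mult_distrib power_mult)
    show ?thesis unfolding pw F_def Bk_def by (simp add: divide_inverse mult_ac)
  qed
  have s2: "Bk k = (\<Sum>j\<le>k. G k j)" for k
    unfolding Bk_def G_def by (rule sal_used[OF q Q nz hb hc, symmetric])
  have s4: "F (j + m) * G (j + m) j = L j * (C j * U j m)" if "j + m \<le> N" for j m
  proof -
    have "F (j + m) * G (j + m) j = L j * (F (j + m) * (qp q (1 / q ^ (j + m)) j * qp q (a * q ^ (j + m)) j))"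
      unfolding F_def G_def L_def by (simp add: divide_inverse mult_ac)
    also have "F (j + m) * (qp q (1 / q ^ (j + m)) j * qp q (a * q ^ (j + m)) j) = C j * U j m"
      unfolding F_def C_def U_def by (rule inner6[OF q Q that])
    finally show ?thesis .
  qed
  have s5: "(\<Sum>m\<le>N - j. U j m) = 0" if "j < N" for j
  proof -
    have Z: "a * q ^ (2 * j) * q ^ (N - j + 1) * q ^ i \<noteq> 1" for i
    proof -
      have eq: "a * q ^ (2 * j) * q ^ (N - j + 1) * q ^ i = a * q ^ Suc (j + N + i)"
        using that by (simp add: power_add[symmetric] mult.assoc add.assoc)
      show ?thesis unfolding eq by (rule Ga)
    qed
    have "N - j \<ge> 1" using that by simp
    then show ?thesis unfolding U_def using unit_full[OF q Q Z] by simp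
  qed
  have s5N: "(\<Sum>m\<le>N - N. U N m) = 1" unfolding U_def by simp
  have "(\<Sum>k\<le>N. W q a k / qp q q k * (qp q b k * qp q c k * qp q (1 / q ^ N) k)
            / (qp q (a * q / b) k * qp q (a * q / c) k * qp q (a * q ^ (N + 1)) k) * (a * q ^ (N + 1) / (b * c)) ^ k)
      = (\<Sum>k\<le>N. \<Sum>j\<le>k. F k * G k j)"
    unfolding s1 s2 by (simp add: sum_distrib_left)
  also have "\<dots> = (\<Sum>j\<le>N. \<Sum>m\<le>N - j. F (j + m) * G (j + m) j)"
    by (rule tri_swap)
  also have "\<dots> = (\<Sum>j\<le>N. L j * C j * (\<Sum>m\<le>N - j. U j m))"
  proof (rule sum.cong[OF refl])
    fix j assume "j \<in> {..N}"
    then have "\<And>m. m \<in> {..N - j} \<Longrightarrow> F (j + m) * G (j + m) j = L j * (C j * U j m)"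
      using s4 by auto
    then show "(\<Sum>m\<le>N - j. F (j + m) * G (j + m) j) = L j * C j * (\<Sum>m\<le>N - j. U j m)"
      by (simp add: sum_distrib_left mult.assoc)
  qed
  also have "\<dots> = L N * C N"
  proof -
    have "(\<Sum>j\<le>N. L j * C j * (\<Sum>m\<le>N - j. U j m)) = (\<Sum>j<N. L j * C j * (\<Sum>m\<le>N - j. U j m)) + L N * C N * (\<Sum>m\<le>N - N. U N m)"
      by (simp add: lessThan_Suc_atMost[symmetric])
    also have "(\<Sum>j<N. L j * C j * (\<Sum>m\<le>N - j. U j m)) = 0"
      using s5 by (intro sum.neutral) auto
    finally show ?thesis using s5N by simp
  qed
  also have "\<dots> = qp q (a * q) N * qp q (a * q / (b * c)) N / (qp q (a * q / b) N * qp q (a * q / c) N)"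
  proof -
    have c1: "qp q (a * q) (2 * N) = qp q (a * q) N * qp q (a * q ^ (N + 1)) N"
      by (simp add: mult_2 qp_add mult.assoc)
    have c2: "qp q (1 / q ^ N) N = (-1 / q) ^ N / T q N * qp q q N"
      by (rule qp_rev[OF q]) (use q in simp_all)
    have c3: "q ^ (N * N) = T q N * T q N * q ^ N" by (rule T_sq[symmetric])
    have n1: "qp q (a * q / b) N \<noteq> 0" using hb by (intro qp_nz) auto
    have n2: "qp q (a * q / c) N \<noteq> 0" using hc by (intro qp_nz) auto
    have n3: "qp q (a * q ^ (N + 1)) N \<noteq> 0" using Ga by (intro qp_nz) (metis mult.assoc power_add add.commute add_Suc_right plus_1_eq_Suc power_Suc)
    have nT: "T q N \<noteq> 0" by (rule T_nz[OF q])
    have sc: "(-1 / q) ^ N * (-1 / q) ^ N * q ^ N * q ^ N = 1" by (rule sq_cancel[OF q])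
    have "L N * C N = qp q (a * q) N * qp q (a * q / (b * c)) N / (qp q (a * q / b) N * qp q (a * q / c) N)
          * ((-1 / q) ^ N * (-1 / q) ^ N * q ^ N * q ^ N)"
      unfolding L_def C_def c1 c2 c3 using Q[of N] n1 n2 n3 nT q by (simp add: field_simps)
    then show ?thesis using sc by simp
  qed
  finally show ?thesis .
qed

lemma pow_split:
  assumes q: "(q::complex) \<noteq> 0"
  shows "y ^ (j + m) * (-1 / q ^ (m + 1)) ^ j = (-y / q) ^ j * (y / q ^ j) ^ m"
proof -
  have "-1 / q ^ (m + 1) = (-1 / q) * (1 / q ^ m)" by simp
  then have a: "(-1 / q ^ (m + 1)) ^ j = (-1 / q) ^ j * (1 / q ^ (j * m))"
    by (simp only: power_mult_distrib) (simp add: power_one_over power_mult[symmetric] mult.commute)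
  have b: "(y / q ^ j) ^ m = y ^ m / q ^ (j * m)" by (simp add: power_divide power_mult)
  have c: "(-y / q) ^ j = y ^ j * (-1 / q) ^ j" by (simp add: power_mult_distrib[symmetric])
  show ?thesis unfolding a b c by (simp add: power_add field_simps)
qed

lemma inner7:
  assumes q: "q \<noteq> 0" and Q: "\<And>n. qp q q n \<noteq> 0" and jm: "j + m \<le> N" and nz: "u \<noteq> 0" "v \<noteq> 0"
  shows "W q A (j + m) / qp q q (j + m) * (qp q u (j + m) * qp q v (j + m) * qp q (1 / q ^ N) (j + m))
           / (qp q (A * q / u) (j + m) * qp q (A * q / v) (j + m) * qp q (A * q ^ (N + 1)) (j + m)) * y ^ (j + m)
           * (qp q (1 / q ^ (j + m)) j * qp q (A * q ^ (j + m)) j)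
       = (qp q (A * q) (2 * j) * qp q (1 / q ^ N) j * qp q u j * qp q v j * (-y / q) ^ j
            / (T q j * qp q (A * q ^ (N + 1)) j * qp q (A * q / u) j * qp q (A * q / v) j))
         * (W q (A * q ^ (2 * j)) m / qp q q m * (qp q (u * q ^ j) m * qp q (v * q ^ j) m * qp q (1 / q ^ (N - j)) m)
            / (qp q (A * q ^ (2 * j) * q / (u * q ^ j)) m * qp q (A * q ^ (2 * j) * q / (v * q ^ j)) m
               * qp q (A * q ^ (2 * j) * q ^ (N - j + 1)) m) * (y / q ^ j) ^ m)"
proof -
  have j: "j \<le> N" using jm by simp
  have i1: "W q A (j + m) * qp q (A * q ^ (j + m)) j = qp q (A * q) (2 * j) * W q (A * q ^ (2 * j)) m"
    by (rule W_shift)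
  have i2: "qp q (1 / q ^ (j + m)) j / qp q q (j + m) = (-1 / q ^ (m + 1)) ^ j / (T q j * qp q q m)"
    by (rule rev_qk[OF q Q])
  have i3: "qp q (1 / q ^ N) (j + m) = qp q (1 / q ^ N) j * qp q (1 / q ^ (N - j)) m"
    by (simp only: qp_add inv_pow[OF q j])
  have e4: "A * q ^ (N + 1) * q ^ j = A * q ^ (2 * j) * q ^ (N - j + 1)"
    using j by (simp add: power_add[symmetric] mult.assoc add.commute)
  have i4: "qp q (A * q ^ (N + 1)) (j + m) = qp q (A * q ^ (N + 1)) j * qp q (A * q ^ (2 * j) * q ^ (N - j + 1)) m"
    by (simp only: qp_add e4)
  have iu: "qp q u (j + m) = qp q u j * qp q (u * q ^ j) m" by (rule qp_add)
  have iv: "qp q v (j + m) = qp q v j * qp q (v * q ^ j) m" by (rule qp_add)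
  have qj: "q ^ (2 * j) = q ^ j * q ^ j" by (simp add: mult_2 power_add)
  have eu: "A * q / u * q ^ j = A * q ^ (2 * j) * q / (u * q ^ j)" unfolding qj using q nz by (simp add: field_simps)
  have ev: "A * q / v * q ^ j = A * q ^ (2 * j) * q / (v * q ^ j)" unfolding qj using q nz by (simp add: field_simps)
  have iau: "qp q (A * q / u) (j + m) = qp q (A * q / u) j * qp q (A * q ^ (2 * j) * q / (u * q ^ j)) m"
    by (simp only: qp_add eu)
  have iav: "qp q (A * q / v) (j + m) = qp q (A * q / v) j * qp q (A * q ^ (2 * j) * q / (v * q ^ j)) m"
    by (simp only: qp_add ev)
  have i5: "y ^ (j + m) * (-1 / q ^ (m + 1)) ^ j = (-y / q) ^ j * (y / q ^ j) ^ m" by (rule pow_split[OF q])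
  have "W q A (j + m) / qp q q (j + m) * (qp q u (j + m) * qp q v (j + m) * qp q (1 / q ^ N) (j + m))
           / (qp q (A * q / u) (j + m) * qp q (A * q / v) (j + m) * qp q (A * q ^ (N + 1)) (j + m)) * y ^ (j + m)
           * (qp q (1 / q ^ (j + m)) j * qp q (A * q ^ (j + m)) j)
      = (W q A (j + m) * qp q (A * q ^ (j + m)) j) * (qp q (1 / q ^ (j + m)) j / qp q q (j + m))
        * (qp q u (j + m) * qp q v (j + m) * qp q (1 / q ^ N) (j + m)) * y ^ (j + m)
        / (qp q (A * q / u) (j + m) * qp q (A * q / v) (j + m) * qp q (A * q ^ (N + 1)) (j + m))"
    by (simp add: divide_inverse mult_ac)
  also have "\<dots> = (qp q (A * q) (2 * j) * W q (A * q ^ (2 * j)) m) * ((-1 / q ^ (m + 1)) ^ j / (T q j * qp q q m))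
        * ((qp q u j * qp q (u * q ^ j) m) * (qp q v j * qp q (v * q ^ j) m) * (qp q (1 / q ^ N) j * qp q (1 / q ^ (N - j)) m)) * y ^ (j + m)
        / ((qp q (A * q / u) j * qp q (A * q ^ (2 * j) * q / (u * q ^ j)) m) * (qp q (A * q / v) j * qp q (A * q ^ (2 * j) * q / (v * q ^ j)) m)
           * (qp q (A * q ^ (N + 1)) j * qp q (A * q ^ (2 * j) * q ^ (N - j + 1)) m))"
    unfolding i1 i2 i3 i4 iu iv iau iav ..
  also have "\<dots> = (qp q (A * q) (2 * j) * W q (A * q ^ (2 * j)) m) / (T q j * qp q q m)
        * ((qp q u j * qp q (u * q ^ j) m) * (qp q v j * qp q (v * q ^ j) m) * (qp q (1 / q ^ N) j * qp q (1 / q ^ (N - j)) m))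
        * (y ^ (j + m) * (-1 / q ^ (m + 1)) ^ j)
        / ((qp q (A * q / u) j * qp q (A * q ^ (2 * j) * q / (u * q ^ j)) m) * (qp q (A * q / v) j * qp q (A * q ^ (2 * j) * q / (v * q ^ j)) m)
           * (qp q (A * q ^ (N + 1)) j * qp q (A * q ^ (2 * j) * q ^ (N - j + 1)) m))"
    by (simp add: divide_inverse mult_ac)
  also have "\<dots> = (qp q (A * q) (2 * j) * qp q (1 / q ^ N) j * qp q u j * qp q v j * (-y / q) ^ j
            / (T q j * qp q (A * q ^ (N + 1)) j * qp q (A * q / u) j * qp q (A * q / v) j))
         * (W q (A * q ^ (2 * j)) m / qp q q m * (qp q (u * q ^ j) m * qp q (v * q ^ j) m * qp q (1 / q ^ (N - j)) m)
            / (qp q (A * q ^ (2 * j) * q / (u * q ^ j)) m * qp q (A * q ^ (2 * j) * q / (v * q ^ j)) m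
               * qp q (A * q ^ (2 * j) * q ^ (N - j + 1)) m) * (y / q ^ j) ^ m)"
    unfolding i5 by (simp add: divide_inverse mult_ac)
  finally show ?thesis .
qed

lemma watson:
  assumes q: "q \<noteq> 0" and Q: "\<And>n. qp q q n \<noteq> 0" and nz: "A \<noteq> 0" "s \<noteq> 0" "t \<noteq> 0" "u \<noteq> 0" "v \<noteq> 0"
    and GA: "\<And>i. A * q ^ Suc i \<noteq> 1"
    and hs: "\<And>i. A * q / s * q ^ i \<noteq> 1" and ht: "\<And>i. A * q / t * q ^ i \<noteq> 1"
    and hu: "\<And>i. A * q / u * q ^ i \<noteq> 1" and hv: "\<And>i. A * q / v * q ^ i \<noteq> 1"
    and hw: "\<And>j. j \<le> N \<Longrightarrow> qp q (u * v / (A * q ^ N)) j \<noteq> 0"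
  shows "(\<Sum>k\<le>N. W q A k / qp q q k * (qp q s k * qp q t k * qp q u k * qp q v k * qp q (1 / q ^ N) k)
            / (qp q (A * q / s) k * qp q (A * q / t) k * qp q (A * q / u) k * qp q (A * q / v) k * qp q (A * q ^ (N + 1)) k)
            * (A ^ 2 * q ^ (N + 2) / (s * t * u * v)) ^ k)
     = qp q (A * q) N * qp q (A * q / (u * v)) N / (qp q (A * q / u) N * qp q (A * q / v) N)
       * (\<Sum>j\<le>N. qp q (1 / q ^ N) j * qp q u j * qp q v j * qp q (A * q / (s * t)) j
            / (qp q q j * qp q (A * q / s) j * qp q (A * q / t) j * qp q (u * v / (A * q ^ N)) j) * q ^ j)"
proof -
  define y where "y = A * q ^ (N + 1) / (u * v)"
  define w where "w = u * v / (A * q ^ N)"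
  define P where "P = qp q (A * q) N * qp q (A * q / (u * v)) N / (qp q (A * q / u) N * qp q (A * q / v) N)"
  define F where "F k = W q A k / qp q q k * (qp q u k * qp q v k * qp q (1 / q ^ N) k)
           / (qp q (A * q / u) k * qp q (A * q / v) k * qp q (A * q ^ (N + 1)) k) * y ^ k" for k
  define Bk where "Bk k = qp q s k * qp q t k / (qp q (A * q / s) k * qp q (A * q / t) k) * (A * q / (s * t)) ^ k" for k
  define G where "G k j = qp q (1 / q ^ k) j * qp q (A * q ^ k) j * qp q (A * q / (s * t)) j
            / (qp q q j * qp q (A * q / s) j * qp q (A * q / t) j) * q ^ j" for k j
  define L where "L j = qp q (A * q / (s * t)) j / (qp q q j * qp q (A * q / s) j * qp q (A * q / t) j) * q ^ j" for j
  define C where "C j = qp q (A * q) (2 * j) * qp q (1 / q ^ N) j * qp q u j * qp q v j * (-y / q) ^ j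
            / (T q j * qp q (A * q ^ (N + 1)) j * qp q (A * q / u) j * qp q (A * q / v) j)" for j
  define U where "U j m = W q (A * q ^ (2 * j)) m / qp q q m * (qp q (u * q ^ j) m * qp q (v * q ^ j) m * qp q (1 / q ^ (N - j)) m)
            / (qp q (A * q ^ (2 * j) * q / (u * q ^ j)) m * qp q (A * q ^ (2 * j) * q / (v * q ^ j)) m
               * qp q (A * q ^ (2 * j) * q ^ (N - j + 1)) m) * (y / q ^ j) ^ m" for j m
  define R where "R j = qp q (1 / q ^ N) j * qp q u j * qp q v j * qp q (A * q / (s * t)) j
            / (qp q q j * qp q (A * q / s) j * qp q (A * q / t) j * qp q w j) * q ^ j" for j
  have s1: "W q A k / qp q q k * (qp q s k * qp q t k * qp q u k * qp q v k * qp q (1 / q ^ N) k)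
            / (qp q (A * q / s) k * qp q (A * q / t) k * qp q (A * q / u) k * qp q (A * q / v) k * qp q (A * q ^ (N + 1)) k)
            * (A ^ 2 * q ^ (N + 2) / (s * t * u * v)) ^ k = F k * Bk k" for k
  proof -
    have eq: "A ^ 2 * q ^ (N + 2) / (s * t * u * v) = y * (A * q / (s * t))"
      unfolding y_def by (simp add: power2_eq_square power_add mult_ac)
    have pw: "(A ^ 2 * q ^ (N + 2) / (s * t * u * v)) ^ k = y ^ k * (A * q / (s * t)) ^ k"
      by (simp only: eq power_mult_distrib)
    show ?thesis unfolding pw F_def Bk_def by (simp add: divide_inverse mult_ac)
  qed
  have s2: "Bk k = (\<Sum>j\<le>k. G k j)" for k
    unfolding Bk_def G_def by (rule sal_used[OF q Q nz(1,2,3) hs ht, symmetric])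
  have s4: "F (j + m) * G (j + m) j = L j * (C j * U j m)" if "j + m \<le> N" for j m
  proof -
    have "F (j + m) * G (j + m) j = L j * (F (j + m) * (qp q (1 / q ^ (j + m)) j * qp q (A * q ^ (j + m)) j))"
      unfolding F_def G_def L_def by (simp add: divide_inverse mult_ac)
    also have "F (j + m) * (qp q (1 / q ^ (j + m)) j * qp q (A * q ^ (j + m)) j) = C j * U j m"
      unfolding F_def C_def U_def by (rule inner7[OF q Q that nz(4,5)])
    finally show ?thesis .
  qed
  have s5: "(\<Sum>m\<le>N - j. U j m) = qp q (A * q ^ (2 * j) * q) (N - j) * qp q (A * q / (u * v)) (N - j)
       / (qp q (A * q / u * q ^ j) (N - j) * qp q (A * q / v * q ^ j) (N - j))" if "j \<le> N" for j
  proof -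
    have qj: "q ^ (2 * j) = q ^ j * q ^ j" by (simp add: mult_2 power_add)
    have e1: "A * q ^ (2 * j) * q ^ (N - j + 1) / (u * q ^ j * (v * q ^ j)) = y / q ^ j"
    proof -
      have "q ^ (N + 1) = q ^ j * q ^ (N - j + 1)" using that by (simp add: power_add[symmetric])
      then show ?thesis unfolding y_def qj using q nz by (simp add: field_simps)
    qed
    have e2: "A * q ^ (2 * j) * q / (u * q ^ j * (v * q ^ j)) = A * q / (u * v)"
      unfolding qj using q nz by (simp add: field_simps)
    have e3: "A * q ^ (2 * j) * q / (u * q ^ j) = A * q / u * q ^ j" unfolding qj using q nz by (simp add: field_simps)
    have e4: "A * q ^ (2 * j) * q / (v * q ^ j) = A * q / v * q ^ j" unfolding qj using q nz by (simp add: field_simps)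
    have "N - j + 1 = (N - j) + 1" by simp
    have six: "(\<Sum>k\<le>N - j. W q (A * q ^ (2 * j)) k / qp q q k * (qp q (u * q ^ j) k * qp q (v * q ^ j) k * qp q (1 / q ^ (N - j)) k)
            / (qp q (A * q ^ (2 * j) * q / (u * q ^ j)) k * qp q (A * q ^ (2 * j) * q / (v * q ^ j)) k
               * qp q (A * q ^ (2 * j) * q ^ (N - j + 1)) k) * (A * q ^ (2 * j) * q ^ (N - j + 1) / (u * q ^ j * (v * q ^ j))) ^ k)
        = qp q (A * q ^ (2 * j) * q) (N - j) * qp q (A * q ^ (2 * j) * q / (u * q ^ j * (v * q ^ j))) (N - j)
          / (qp q (A * q ^ (2 * j) * q / (u * q ^ j)) (N - j) * qp q (A * q ^ (2 * j) * q / (v * q ^ j)) (N - j))"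
    proof (rule sixW5[OF q Q])
      show "A * q ^ (2 * j) \<noteq> 0" "u * q ^ j \<noteq> 0" "v * q ^ j \<noteq> 0" using q nz by auto
      show "A * q ^ (2 * j) * q ^ Suc i \<noteq> 1" for i
      proof -
        have eq: "A * q ^ (2 * j) * q ^ Suc i = A * q ^ Suc (2 * j + i)" by (simp add: power_add mult.assoc)
        show ?thesis unfolding eq by (rule GA)
      qed
      show "A * q ^ (2 * j) * q / (u * q ^ j) * q ^ i \<noteq> 1" for i
        unfolding e3 using hu[of "j + i"] by (simp add: power_add mult.assoc)
      show "A * q ^ (2 * j) * q / (v * q ^ j) * q ^ i \<noteq> 1" for i
        unfolding e4 using hv[of "j + i"] by (simp add: power_add mult.assoc)
    qed
    show ?thesis using six unfolding U_def e1 e2 e3 e4 .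
  qed
  have s6: "L j * C j * (qp q (A * q ^ (2 * j) * q) (N - j) * qp q (A * q / (u * v)) (N - j)
       / (qp q (A * q / u * q ^ j) (N - j) * qp q (A * q / v * q ^ j) (N - j))) = P * R j" if j: "j \<le> N" for j
  proof -
    have c1: "qp q (A * q) (2 * j) * qp q (A * q ^ (2 * j) * q) (N - j) = qp q (A * q) N * qp q (A * q ^ (N + 1)) j"
    proof -
      have "qp q (A * q) (2 * j) * qp q (A * q ^ (2 * j) * q) (N - j) = qp q (A * q) (2 * j + (N - j))"
        by (simp add: qp_add mult_ac)
      also have "2 * j + (N - j) = N + j" using j by simp
      also have "qp q (A * q) (N + j) = qp q (A * q) N * qp q (A * q ^ (N + 1)) j"
        by (simp add: qp_add mult_ac)
      finally show ?thesis .
    qed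
    have c2: "qp q (A * q / u) j * qp q (A * q / u * q ^ j) (N - j) = qp q (A * q / u) N"
    proof -
      have "qp q (A * q / u) j * qp q (A * q / u * q ^ j) (N - j) = qp q (A * q / u) (j + (N - j))"
        by (simp only: qp_add)
      then show ?thesis using j by simp
    qed
    have c3: "qp q (A * q / v) j * qp q (A * q / v * q ^ j) (N - j) = qp q (A * q / v) N"
    proof -
      have "qp q (A * q / v) j * qp q (A * q / v * q ^ j) (N - j) = qp q (A * q / v) (j + (N - j))"
        by (simp only: qp_add)
      then show ?thesis using j by simp
    qed
    have c4: "qp q (A * q / (u * v)) N = qp q (A * q / (u * v)) (N - j) * ((-y / q) ^ j / T q j * qp q w j)"
    proof -
      have "qp q (A * q / (u * v)) N = qp q (A * q / (u * v)) ((N - j) + j)" using j by simp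
      also have "\<dots> = qp q (A * q / (u * v)) (N - j) * qp q (A * q / (u * v) * q ^ (N - j)) j"
        by (rule qp_add)
      also have "qp q (A * q / (u * v) * q ^ (N - j)) j = (-1 / w) ^ j / T q j * qp q w j"
      proof (rule qp_rev[OF q])
        show "w \<noteq> 0" unfolding w_def using nz q by simp
        have "q ^ N = q ^ (N - j) * q ^ j" using j by (simp add: power_add[symmetric])
        then show "A * q / (u * v) * q ^ (N - j) * w * q ^ j = q"
          unfolding w_def using nz q by (simp add: field_simps)
      qed
      also have "-1 / w = -y / q" unfolding w_def y_def using nz q by (simp add: field_simps)
      finally show ?thesis .
    qed
    have nT: "T q j \<noteq> 0" by (rule T_nz[OF q])
    have n1: "qp q (A * q ^ (N + 1)) j \<noteq> 0"
      using GA by (intro qp_nz) (metis mult.assoc power_add add.commute add_Suc_right plus_1_eq_Suc power_Suc)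
    have n2: "qp q (A * q / u) N \<noteq> 0" using hu by (intro qp_nz) auto
    have n3: "qp q (A * q / v) N \<noteq> 0" using hv by (intro qp_nz) auto
    have n4: "qp q w j \<noteq> 0" unfolding w_def by (rule hw[OF j])
    have n5: "qp q (A * q / u * q ^ j) (N - j) \<noteq> 0" "qp q (A * q / u) j \<noteq> 0"
      using n2 c2 by auto
    have n6: "qp q (A * q / v * q ^ j) (N - j) \<noteq> 0" "qp q (A * q / v) j \<noteq> 0"
      using n3 c3 by auto
    have ns: "qp q (A * q / s) j \<noteq> 0" "qp q (A * q / t) j \<noteq> 0"
      using hs ht by (intro qp_nz; blast)+
    have c1': "qp q (A * q) N = qp q (A * q) (2 * j) * qp q (A * q ^ (2 * j) * q) (N - j) / qp q (A * q ^ (N + 1)) j"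
      using c1 n1 by (simp add: field_simps)
    show ?thesis
      unfolding L_def C_def P_def R_def c4 c1' c2[symmetric] c3[symmetric]
      using nT n1 n4 n5 n6 ns Q[of j] q
      by (simp add: field_simps)
  qed
  have "(\<Sum>k\<le>N. W q A k / qp q q k * (qp q s k * qp q t k * qp q u k * qp q v k * qp q (1 / q ^ N) k)
            / (qp q (A * q / s) k * qp q (A * q / t) k * qp q (A * q / u) k * qp q (A * q / v) k * qp q (A * q ^ (N + 1)) k)
            * (A ^ 2 * q ^ (N + 2) / (s * t * u * v)) ^ k)
      = (\<Sum>k\<le>N. \<Sum>j\<le>k. F k * G k j)"
    unfolding s1 s2 by (simp add: sum_distrib_left)
  also have "\<dots> = (\<Sum>j\<le>N. \<Sum>m\<le>N - j. F (j + m) * G (j + m) j)"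
    by (rule tri_swap)
  also have "\<dots> = (\<Sum>j\<le>N. P * R j)"
  proof (rule sum.cong[OF refl])
    fix j assume "j \<in> {..N}"
    then have j: "j \<le> N" by simp
    then have "\<And>m. m \<in> {..N - j} \<Longrightarrow> F (j + m) * G (j + m) j = L j * (C j * U j m)"
      using s4 by auto
    then have "(\<Sum>m\<le>N - j. F (j + m) * G (j + m) j) = L j * C j * (\<Sum>m\<le>N - j. U j m)"
      by (simp add: sum_distrib_left mult.assoc)
    also have "\<dots> = P * R j" unfolding s5[OF j] by (rule s6[OF j])
    finally show "(\<Sum>m\<le>N - j. F (j + m) * G (j + m) j) = P * R j" .
  qed
  also have "\<dots> = P * (\<Sum>j\<le>N. R j)" by (simp add: sum_distrib_left)
  finally show ?thesis unfolding P_def R_def w_def .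
qed

lemma qp_tendsto:
  fixes q x :: complex
  assumes "norm q < 1"
  shows "(\<lambda>n. qp q x n) \<longlonglongrightarrow> prodinf (\<lambda>j. 1 - x * q ^ j)"
proof -
  define f where "f j = 1 - x * q ^ j" for j
  have "summable (\<lambda>j. norm x * norm q ^ j)"
    using assms by (intro summable_mult summable_geometric) simp
  then have "summable (\<lambda>j. norm (f j - 1))" unfolding f_def by (simp add: norm_mult norm_power)
  then have "abs_convergent_prod f" by (simp add: abs_convergent_prod_conv_summable)
  then have "convergent_prod f" by (rule abs_convergent_prod_imp_convergent_prod)
  then have "(\<lambda>n. \<Prod>i\<le>n. f i) \<longlonglongrightarrow> prodinf f" by (rule convergent_prod_LIMSEQ)
  then have "(\<lambda>n. \<Prod>i<n. f i) \<longlonglongrightarrow> prodinf f" by (simp add: LIMSEQ_lessThan_iff_atMost)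
  then show ?thesis unfolding f_def qp_def .
qed

lemma qpinf_eq:
  assumes "norm q < 1"
  shows "qpoch_inf x q = prodinf (\<lambda>j. 1 - x * q ^ j)"
  unfolding qpoch_inf_def qpoch_nat by (rule limI[OF qp_tendsto[OF assms]])

lemma qpinf_split:
  assumes "norm q < 1"
  shows "qpoch_inf x q = qp q x m * qpoch_inf (x * q ^ m) q"
proof -
  have t1: "(\<lambda>n. qp q x (n + m)) \<longlonglongrightarrow> qpoch_inf x q"
    unfolding qpinf_eq[OF assms] using qp_tendsto[OF assms] by (rule LIMSEQ_ignore_initial_segment)
  have t2: "(\<lambda>n. qp q x m * qp q (x * q ^ m) n) \<longlonglongrightarrow> qp q x m * qpoch_inf (x * q ^ m) q"
    unfolding qpinf_eq[OF assms] by (intro tendsto_mult_left qp_tendsto[OF assms])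
  have "(\<lambda>n. qp q x (n + m)) = (\<lambda>n. qp q x m * qp q (x * q ^ m) n)"
    by (rule ext) (metis add.commute qp_add)
  then show ?thesis using t1 t2 LIMSEQ_unique by metis
qed

definition Pn :: "complex \<Rightarrow> complex \<Rightarrow> nat \<Rightarrow> complex" where
  "Pn q y m = (\<Prod>j\<in>{1..m}. 1 - y / q ^ j)"

definition T2 :: "complex \<Rightarrow> nat \<Rightarrow> complex" where
  "T2 q m = (\<Prod>j\<in>{1..m}. q ^ j)"

lemma qpoch_neg: "qpoch y q (- int m) = 1 / Pn q y m"
proof (cases "m = 0")
  case True then show ?thesis by (simp add: qpoch_def Pn_def)
next
  case False then show ?thesis unfolding qpoch_def Pn_def by simp
qed

lemma div_div_cancel: "(t::complex) \<noteq> 0 \<Longrightarrow> (a / t) / (b / t) = a / b"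
  by (simp add: field_simps)

lemma ratio_rearr: "(a::complex) * b / (c * d) = (a / c) * b / d"
  by (simp add: divide_inverse mult_ac)

lemma T2_nz: "q \<noteq> 0 \<Longrightarrow> T2 q m \<noteq> 0" by (simp add: T2_def)

lemma Pn_eq:
  assumes q: "q \<noteq> 0" and y: "y \<noteq> 0"
  shows "Pn q y m = (-y) ^ m * qp q (q / y) m / T2 q m"
proof (induction m)
  case 0 then show ?case by (simp add: Pn_def T2_def)
next
  case (Suc m)
  have a: "Pn q y (Suc m) = Pn q y m * (1 - y / q ^ Suc m)" by (simp add: Pn_def)
  have b: "T2 q (Suc m) = T2 q m * q ^ Suc m" by (simp add: T2_def)
  show ?case unfolding a b qp_Suc Suc.IH using q y T2_nz[OF q, of m]
    by (simp add: field_simps)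
qed

lemma neg_ratio1:
  assumes q: "q \<noteq> 0" and x: "x \<noteq> 0" and nz: "qp q x m \<noteq> 0"
  shows "qpoch (q / x) q (- int m) / qpoch x q (- int m) = (x ^ 2 / q) ^ m * qp q (q / x) m / qp q x m"
proof -
  have qx: "q / x \<noteq> 0" using q x by simp
  have e: "q / (q / x) = x" using q x by simp
  have "qpoch (q / x) q (- int m) / qpoch x q (- int m) = Pn q x m / Pn q (q / x) m"
    unfolding qpoch_neg by simp
  also have "\<dots> = (-x) ^ m * qp q (q / x) m / ((-(q / x)) ^ m * qp q x m)"
    unfolding Pn_eq[OF q x] Pn_eq[OF q qx] e by (rule div_div_cancel[OF T2_nz[OF q]])
  also have "\<dots> = ((-x) ^ m / (-(q / x)) ^ m) * qp q (q / x) m / qp q x m"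
    by (rule ratio_rearr)
  also have "(-x) ^ m / (-(q / x)) ^ m = (x ^ 2 / q) ^ m"
  proof -
    have "(-x) / (-(q / x)) = x ^ 2 / q" using q x by (simp add: field_simps power2_eq_square)
    then show ?thesis by (simp only: power_divide[symmetric])
  qed
  finally show ?thesis .
qed

lemma neg_ratio2:
  assumes q: "q \<noteq> 0" and x: "x \<noteq> 0" "x \<noteq> 1" and nz: "qp q (x * q) m \<noteq> 0"
  shows "qpoch (q / x) q (- int (Suc m)) / qpoch (x * q) q (- int (Suc m)) = - (x ^ (2 * m + 1)) * qp q (q / x) m / qp q (x * q) m"
proof -
  have qx: "q / x \<noteq> 0" using q x by simp
  have xq: "x * q \<noteq> 0" using q x by simp
  have e: "q / (q / x) = x" "q / (x * q) = 1 / x" using q x by auto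
  have e2: "qp q (1 / x) (Suc m) = (1 - 1 / x) * qp q (q / x) m" by (simp add: qp_Suc')
  have e3: "qp q x (Suc m) = (1 - x) * qp q (x * q) m" by (simp add: qp_Suc')
  have x1: "1 - x \<noteq> 0" using x by simp
  have "qpoch (q / x) q (- int (Suc m)) / qpoch (x * q) q (- int (Suc m)) = Pn q (x * q) (Suc m) / Pn q (q / x) (Suc m)"
    unfolding qpoch_neg by simp
  also have "\<dots> = (-(x * q)) ^ Suc m * qp q (1 / x) (Suc m) / ((-(q / x)) ^ Suc m * qp q x (Suc m))"
    unfolding Pn_eq[OF q xq] Pn_eq[OF q qx] e by (rule div_div_cancel[OF T2_nz[OF q]])
  also have "\<dots> = ((-(x * q)) ^ Suc m / (-(q / x)) ^ Suc m) * ((1 - 1 / x) / (1 - x)) * qp q (q / x) m / qp q (x * q) m"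
    unfolding e2 e3 by (simp add: divide_inverse mult_ac)
  also have "(-(x * q)) ^ Suc m / (-(q / x)) ^ Suc m = (x ^ 2) ^ Suc m"
  proof -
    have "(-(x * q)) / (-(q / x)) = x ^ 2" using q x by (simp add: field_simps power2_eq_square)
    then show ?thesis by (simp only: power_divide[symmetric])
  qed
  also have "(1 - 1 / x) / (1 - x) = - 1 / x" using x x1 by (simp add: field_simps)
  also have "(x ^ 2) ^ Suc m * (- 1 / x) = - (x ^ (2 * m + 1))"
  proof -
    have "(x ^ 2) ^ Suc m = x ^ (2 * Suc m)" by (simp only: power_mult)
    also have "\<dots> = x ^ (2 * m + 1) * x" by simp
    finally show ?thesis using x by simp
  qed
  finally show ?thesis by simp
qed

lemma prod5_div: "(a1 * a2 * a3 * a4 * a5) / (b1 * b2 * b3 * b4 * b5) = (a1 / b1) * (a2 / b2) * (a3 / b3) * (a4 / b4) * (a5 / (b5::complex))"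
  by (simp add: divide_inverse mult_ac)

lemma W1_ratio:
  assumes q: "q \<noteq> 0" "norm q < 1"
  shows "W q 1 m / qp q q m = (1 + q ^ m) - (if m = 0 then 1 else 0)"
proof (cases m)
  case 0 then show ?thesis by simp
next
  case (Suc k)
  have n1: "qp q q k \<noteq> 0" by (rule qp_q_nz[OF q(2,1)])
  have n2: "1 - q * q ^ k \<noteq> 0" using qq_nz[OF q(2,1), of k] by simp
  have p2: "q ^ (2 * Suc k) = (q * q ^ k) * (q * q ^ k)" by (simp only: mult_2 power_add power_Suc)
  have w: "W q 1 m = (1 - q * q ^ k) * (1 + q * q ^ k) * qp q q k" unfolding Suc W_Suc p2 by (simp add: algebra_simps)
  have p: "qp q q m = qp q q k * (1 - q * q ^ k)" unfolding Suc by (simp add: qp_Suc)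
  show ?thesis unfolding w p using Suc n1 n2 by simp
qed

lemma Wq_ratio:
  assumes q: "q \<noteq> 0" "norm q < 1"
  shows "W q q m / qp q q m = (1 - q ^ (2 * m + 1)) / (1 - q)"
proof (cases m)
  case 0 
  have "1 - q \<noteq> 0" using qq_nz[OF q(2,1), of 0] by simp
  then show ?thesis using 0 by simp
next
  case (Suc k)
  have n1: "qp q (q * q) k \<noteq> 0" using qp_q_nz[OF q(2,1), of "Suc k"] by (simp add: qp_Suc')
  have n2: "1 - q \<noteq> 0" using qq_nz[OF q(2,1), of 0] by simp
  have w: "W q q m = (1 - q ^ (2 * m + 1)) * qp q (q * q) k" unfolding Suc W_Suc by (simp add: mult.commute)
  have p: "qp q q m = (1 - q) * qp q (q * q) k" unfolding Suc by (simp add: qp_Suc')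
  show ?thesis unfolding w p using n1 n2 by simp
qed

lemma qp_nz_at: "(\<And>k. qp q x k \<noteq> 0) \<Longrightarrow> x * q ^ i \<noteq> 1"
  using qp_nz_iff[of q x "Suc i"] by auto

lemma pref1:
  assumes q1: "norm q < 1" and aN: "a = q ^ Suc N" and q0: "q \<noteq> 0"
    and hinf: "qpoch_inf a q * qpoch_inf b q * qpoch_inf c q * qpoch_inf (a*b*c/q^2) q \<noteq> 0"
  shows "qpoch_inf q q * qpoch_inf (a*b/q) q * qpoch_inf (b*c/q) q * qpoch_inf (a*c/q) q
       / (qpoch_inf a q * qpoch_inf b q * qpoch_inf c q * qpoch_inf (a*b*c/q^2) q)
       = qp q q N * qp q (b * c / q) N / (qp q b N * qp q c N)"
proof -
  have i1: "qpoch_inf q q = qp q q N * qpoch_inf a q"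
    using qpinf_split[OF q1, of q N] aN by simp
  have i2: "qpoch_inf b q = qp q b N * qpoch_inf (a*b/q) q"
  proof -
    have "b * q ^ N = a * b / q" using aN q0 by simp
    then show ?thesis using qpinf_split[OF q1, of b N] by simp
  qed
  have i3: "qpoch_inf c q = qp q c N * qpoch_inf (a*c/q) q"
  proof -
    have "c * q ^ N = a * c / q" using aN q0 by simp
    then show ?thesis using qpinf_split[OF q1, of c N] by simp
  qed
  have i4: "qpoch_inf (b*c/q) q = qp q (b*c/q) N * qpoch_inf (a*b*c/q^2) q"
  proof -
    have "b * c / q * q ^ N = a * b * c / q ^ 2" using aN q0 by (simp add: power2_eq_square)
    then show ?thesis using qpinf_split[OF q1, of "b*c/q" N] by simp
  qed
  have nz: "qpoch_inf a q \<noteq> 0" "qp q b N \<noteq> 0" "qpoch_inf (a*b/q) q \<noteq> 0" "qp q c N \<noteq> 0"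
     "qpoch_inf (a*c/q) q \<noteq> 0" "qpoch_inf (a*b*c/q^2) q \<noteq> 0"
    using hinf unfolding i2 i3 by auto
  show ?thesis unfolding i1 i2 i3 i4 using nz by (simp add: field_simps)
qed

lemma core1:
  fixes q a b c d e :: complex
  assumes q0: "q \<noteq> 0" and q1: "norm q < 1" and aN: "a = q ^ Suc N"
    and nz: "b \<noteq> 0" "c \<noteq> 0" "d \<noteq> 0" "e \<noteq> 0"
    and ha: "\<And>k. qp q a k \<noteq> 0" and hb: "\<And>k. qp q b k \<noteq> 0" and hc: "\<And>k. qp q c k \<noteq> 0"
    and hd: "\<And>k. qp q d k \<noteq> 0" and he: "\<And>k. qp q e k \<noteq> 0"
    and h3: "\<And>k. qp q (q^3/(a*b*c)) k \<noteq> 0"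
    and hinf: "qpoch_inf a q * qpoch_inf b q * qpoch_inf c q * qpoch_inf (a*b*c/q^2) q \<noteq> 0"
  shows "(\<Sum>\<^sub>\<infinity>k::int. qpoch (q/a) q k * qpoch (q/b) q k * qpoch (q/c) q k * qpoch (q/d) q k * qpoch (q/e) q k
            / (qpoch a q k * qpoch b q k * qpoch c q k * qpoch d q k * qpoch e q k)
            * (a*b*c*d*e / q^3) powi k)
     = qpoch_inf q q * qpoch_inf (a*b/q) q * qpoch_inf (b*c/q) q * qpoch_inf (a*c/q) q
       / (qpoch_inf a q * qpoch_inf b q * qpoch_inf c q * qpoch_inf (a*b*c/q^2) q)
       * (\<Sum>k::nat. qpoch (q/a) q (int k) * qpoch (q/b) q (int k) * qpoch (q/c) q (int k)
                      * qpoch (d*e/q) q (int k)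
            / (qpoch q q (int k) * qpoch (q^3/(a*b*c)) q (int k) * qpoch d q (int k) * qpoch e q (int k))
            * q ^ k)"
proof -
  have a0: "a \<noteq> 0" using aN q0 by simp
  have Q: "\<And>n. qp q q n \<noteq> 0" by (rule qp_q_nz[OF q1 q0])
  define z where "z = a*b*c*d*e/q^3"
  have z0: "z \<noteq> 0" unfolding z_def using a0 nz q0 by simp
  define r where "r m = qp q (q/a) m * qp q (q/b) m * qp q (q/c) m * qp q (q/d) m * qp q (q/e) m
       / (qp q a m * qp q b m * qp q c m * qp q d m * qp q e m)" for m
  define f where "f k = qpoch (q/a) q k * qpoch (q/b) q k * qpoch (q/c) q k * qpoch (q/d) q k * qpoch (q/e) q k
            / (qpoch a q k * qpoch b q k * qpoch c q k * qpoch d q k * qpoch e q k)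
            * (a*b*c*d*e / q^3) powi k" for k
  have P1: "f (int m) = r m * z ^ m" for m
    unfolding f_def r_def z_def by (simp add: qpoch_nat)
  have P2: "f (- int m) = q ^ m * (r m * z ^ m)" for m
  proof -
    have "f (- int m) = (qpoch (q/a) q (- int m) / qpoch a q (- int m)) * (qpoch (q/b) q (- int m) / qpoch b q (- int m))
        * (qpoch (q/c) q (- int m) / qpoch c q (- int m)) * (qpoch (q/d) q (- int m) / qpoch d q (- int m))
        * (qpoch (q/e) q (- int m) / qpoch e q (- int m)) * inverse (z ^ m)"
      unfolding f_def prod5_div z_def by (simp add: power_int_minus)
    also have "\<dots> = ((a ^ 2 / q) ^ m * qp q (q / a) m / qp q a m) * ((b ^ 2 / q) ^ m * qp q (q / b) m / qp q b m)
        * ((c ^ 2 / q) ^ m * qp q (q / c) m / qp q c m) * ((d ^ 2 / q) ^ m * qp q (q / d) m / qp q d m)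
        * ((e ^ 2 / q) ^ m * qp q (q / e) m / qp q e m) * inverse (z ^ m)"
      by (simp only: neg_ratio1[OF q0 a0 ha] neg_ratio1[OF q0 nz(1) hb] neg_ratio1[OF q0 nz(2) hc]
          neg_ratio1[OF q0 nz(3) hd] neg_ratio1[OF q0 nz(4) he])
    also have "\<dots> = ((a ^ 2 / q) ^ m * (b ^ 2 / q) ^ m * (c ^ 2 / q) ^ m * (d ^ 2 / q) ^ m * (e ^ 2 / q) ^ m) * r m * inverse (z ^ m)"
      unfolding r_def by (simp add: divide_inverse mult_ac)
    also have "(a ^ 2 / q) ^ m * (b ^ 2 / q) ^ m * (c ^ 2 / q) ^ m * (d ^ 2 / q) ^ m * (e ^ 2 / q) ^ m = q ^ m * z ^ m * z ^ m"
    proof -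
      have "(a ^ 2 / q) * (b ^ 2 / q) * (c ^ 2 / q) * (d ^ 2 / q) * (e ^ 2 / q) = q * z * z"
        unfolding z_def power3_eq_cube using q0 by (simp add: field_simps power2_eq_square)
      then have "((a ^ 2 / q) * (b ^ 2 / q) * (c ^ 2 / q) * (d ^ 2 / q) * (e ^ 2 / q)) ^ m = (q * z * z) ^ m" by simp
      then show ?thesis by (simp only: power_mult_distrib)
    qed
    finally show ?thesis using z0 by (simp add: field_simps)
  qed
  have P3: "r m = 0" if "N < m" for m
  proof -
    have "qp q (q/a) m = 0"
      by (rule qp_zero[of _ _ N]) (use aN q0 that in auto)
    then show ?thesis unfolding r_def by simp
  qed
  define T where "T = int ` {..N} \<union> (\<lambda>m. - int m) ` {1..N}"
  have fin: "finite T" unfolding T_def by simp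
  have "infsum f UNIV = infsum f T"
  proof (rule infsum_cong_neutral)
    fix x assume x: "x \<in> UNIV - T"
    show "f x = 0"
    proof (cases "x \<ge> 0")
      case True
      define m where "m = nat x"
      have m: "x = int m" using True unfolding m_def by simp
      then have "N < m" using x unfolding T_def by (auto simp: not_le)
      then show ?thesis unfolding m P1 P3[OF \<open>N < m\<close>] by simp
    next
      case False
      define m where "m = nat (- x)"
      have m: "x = - int m" using False unfolding m_def by simp
      have m1: "m \<ge> 1" using False unfolding m_def by simp
      have "N < m"
      proof (rule ccontr)
        assume "\<not> N < m"
        then have "m \<in> {1..N}" using m1 by simp
        then have "x \<in> T" unfolding T_def m by blast
        then show False using x by simp
      qed
      then show ?thesis unfolding m P2 P3[OF \<open>N < m\<close>] by simp
    qed
  qed auto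
  also have "\<dots> = sum f T" using fin by simp
  also have "\<dots> = (\<Sum>m\<le>N. f (int m)) + (\<Sum>m\<in>{1..N}. f (- int m))"
  proof -
    have disj: "int ` {..N} \<inter> (\<lambda>m. - int m) ` {1..N} = {}" by auto
    have "sum f T = sum f (int ` {..N}) + sum f ((\<lambda>m. - int m) ` {1..N})"
      unfolding T_def by (rule sum.union_disjoint) (use disj in auto)
    also have "sum f (int ` {..N}) = (\<Sum>m\<le>N. f (int m))" by (simp add: sum.reindex)
    also have "sum f ((\<lambda>m. - int m) ` {1..N}) = (\<Sum>m\<in>{1..N}. f (- int m))"
      by (subst sum.reindex) (auto simp: inj_on_def)
    finally show ?thesis .
  qed
  also have "\<dots> = (\<Sum>m\<le>N. (W q 1 m / qp q q m) * (r m * z ^ m))"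
  proof -
    have r0: "r 0 = 1" unfolding r_def by simp
    have s1: "(\<Sum>m\<le>N. q ^ m * (r m * z ^ m)) = 1 + (\<Sum>m\<in>{1..N}. q ^ m * (r m * z ^ m))"
    proof -
      have "{..N} = insert 0 {1..N}" by auto
      then show ?thesis using r0 by simp
    qed
    have "(\<Sum>m\<le>N. (W q 1 m / qp q q m) * (r m * z ^ m))
        = (\<Sum>m\<le>N. r m * z ^ m + q ^ m * (r m * z ^ m) - (if m = 0 then r m * z ^ m else 0))"
      by (rule sum.cong[OF refl]) (simp add: W1_ratio[OF q0 q1] algebra_simps)
    also have "\<dots> = (\<Sum>m\<le>N. r m * z ^ m) + (\<Sum>m\<le>N. q ^ m * (r m * z ^ m)) - 1"
      by (simp add: sum.distrib sum_subtractf r0)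
    finally show ?thesis unfolding P1 P2 s1 by simp
  qed
  also have "\<dots> = qp q q N * qp q (b * c / q) N / (qp q b N * qp q c N)
       * (\<Sum>j\<le>N. qp q (q / a) j * qp q (q / b) j * qp q (q / c) j * qp q (d * e / q) j
            / (qp q q j * qp q d j * qp q e j * qp q (q^3/(a*b*c)) j) * q ^ j)"
  proof -
    have e1: "1 * q = q" by simp
    have e2: "q / (q / x) = x" if "x \<noteq> 0" for x using q0 that by simp
    have e3: "1 * q ^ (N + 1) = a" using aN by simp
    have e4: "1 ^ 2 * q ^ (N + 2) / (q / d * (q / e) * (q / b) * (q / c)) = z"
      unfolding z_def aN using q0 nz by (simp add: field_simps power2_eq_square) (simp add: power3_eq_cube)
    have e5: "q / (q / b * (q / c)) = b * c / q" using q0 nz by (simp add: field_simps power2_eq_square)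
    have e6: "q / (q / d * (q / e)) = d * e / q" using q0 nz by (simp add: field_simps power2_eq_square)
    have e7: "1 * q ^ N = q ^ N" by simp
    have e8: "q / b * (q / c) / q ^ N = q ^ 3 / (a * b * c)" unfolding aN using q0 nz by (simp add: field_simps power3_eq_cube)
    have e9: "1 / q ^ N = q / a" unfolding aN using q0 by simp
    have hs: "\<And>i. 1 * q / (q / x) * q ^ i \<noteq> 1" if "x \<noteq> 0" "\<And>k. qp q x k \<noteq> 0" for x
      unfolding e1 e2[OF that(1)] by (rule qp_nz_at[OF that(2)])
    have GA: "\<And>i. 1 * q ^ Suc i \<noteq> 1" using qq_nz[OF q1 q0] by simp
    have hw: "\<And>j. j \<le> N \<Longrightarrow> qp q (q / b * (q / c) / (1 * q ^ N)) j \<noteq> 0"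
      unfolding e7 e8 by (rule h3)
    have W: "(\<Sum>k\<le>N. W q 1 k / qp q q k * (qp q (q/d) k * qp q (q/e) k * qp q (q/b) k * qp q (q/c) k * qp q (1 / q ^ N) k)
            / (qp q (1 * q / (q/d)) k * qp q (1 * q / (q/e)) k * qp q (1 * q / (q/b)) k * qp q (1 * q / (q/c)) k * qp q (1 * q ^ (N + 1)) k)
            * (1 ^ 2 * q ^ (N + 2) / (q/d * (q/e) * (q/b) * (q/c))) ^ k)
     = qp q (1 * q) N * qp q (1 * q / (q/b * (q/c))) N / (qp q (1 * q / (q/b)) N * qp q (1 * q / (q/c)) N)
       * (\<Sum>j\<le>N. qp q (1 / q ^ N) j * qp q (q/b) j * qp q (q/c) j * qp q (1 * q / (q/d * (q/e))) j
            / (qp q q j * qp q (1 * q / (q/d)) j * qp q (1 * q / (q/e)) j * qp q (q/b * (q/c) / (1 * q ^ N)) j) * q ^ j)"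
      by (rule watson[OF q0 Q _ _ _ _ _ GA hs hs hs hs hw]) (use q0 nz hb hc hd he in auto)
    have W': "(\<Sum>k\<le>N. W q 1 k / qp q q k * (qp q (q/d) k * qp q (q/e) k * qp q (q/b) k * qp q (q/c) k * qp q (q / a) k)
            / (qp q d k * qp q e k * qp q b k * qp q c k * qp q a k) * z ^ k)
     = qp q q N * qp q (b * c / q) N / (qp q b N * qp q c N)
       * (\<Sum>j\<le>N. qp q (q / a) j * qp q (q/b) j * qp q (q/c) j * qp q (d * e / q) j
            / (qp q q j * qp q d j * qp q e j * qp q (q ^ 3 / (a * b * c)) j) * q ^ j)"
      using W unfolding e1 e2[OF nz(1)] e2[OF nz(2)] e2[OF nz(3)] e2[OF nz(4)] e3 e4 e5 e6 e7 e8 e9 .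
    show ?thesis unfolding W'[symmetric]
      by (rule sum.cong[OF refl]) (simp add: r_def divide_inverse mult_ac)
  qed
  also have "\<dots> = qpoch_inf q q * qpoch_inf (a*b/q) q * qpoch_inf (b*c/q) q * qpoch_inf (a*c/q) q
       / (qpoch_inf a q * qpoch_inf b q * qpoch_inf c q * qpoch_inf (a*b*c/q^2) q)
       * (\<Sum>k::nat. qpoch (q/a) q (int k) * qpoch (q/b) q (int k) * qpoch (q/c) q (int k)
                      * qpoch (d*e/q) q (int k)
            / (qpoch q q (int k) * qpoch (q^3/(a*b*c)) q (int k) * qpoch d q (int k) * qpoch e q (int k))
            * q ^ k)"
  proof -
    have "(\<Sum>k::nat. qpoch (q/a) q (int k) * qpoch (q/b) q (int k) * qpoch (q/c) q (int k)
                      * qpoch (d*e/q) q (int k)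
            / (qpoch q q (int k) * qpoch (q^3/(a*b*c)) q (int k) * qpoch d q (int k) * qpoch e q (int k))
            * q ^ k)
        = (\<Sum>j\<le>N. qp q (q / a) j * qp q (q / b) j * qp q (q / c) j * qp q (d * e / q) j
            / (qp q q j * qp q d j * qp q e j * qp q (q^3/(a*b*c)) j) * q ^ j)"
    proof -
      have z: "qp q (q / a) k = 0" if "k \<notin> {..N}" for k
        by (rule qp_zero[of _ _ N]) (use aN q0 that in auto)
      show ?thesis unfolding qpoch_nat
        by (subst suminf_finite[of "{..N}"]) (auto simp: z mult_ac)
    qed
    then show ?thesis unfolding pref1[OF q1 aN q0 hinf] by simp
  qed
  finally show ?thesis unfolding f_def .
qed

lemma pref2:
  assumes q1: "norm q < 1" and aN: "a = q ^ Suc N" and q0: "q \<noteq> 0"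
    and hinf: "qpoch_inf (a*q) q * qpoch_inf (b*q) q * qpoch_inf (c*q) q * qpoch_inf (a*b*c/q) q \<noteq> 0"
  shows "qpoch_inf q q * qpoch_inf (a*b) q * qpoch_inf (b*c) q * qpoch_inf (a*c) q
       / (qpoch_inf (a*q) q * qpoch_inf (b*q) q * qpoch_inf (c*q) q * qpoch_inf (a*b*c/q) q)
       = qp q q (Suc N) * qp q (b * c) N / (qp q (b * q) N * qp q (c * q) N)"
proof -
  have i1: "qpoch_inf q q = qp q q (Suc N) * qpoch_inf (a*q) q"
  proof -
    have eq: "q * q ^ Suc N = a * q" using aN by simp
    show ?thesis using qpinf_split[OF q1, of q "Suc N"] unfolding eq .
  qed
  have i2: "qpoch_inf (b*q) q = qp q (b*q) N * qpoch_inf (a*b) q"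
  proof -
    have eq: "b * q * q ^ N = a * b" using aN by simp
    show ?thesis using qpinf_split[OF q1, of "b*q" N] unfolding eq .
  qed
  have i3: "qpoch_inf (c*q) q = qp q (c*q) N * qpoch_inf (a*c) q"
  proof -
    have eq: "c * q * q ^ N = a * c" using aN by simp
    show ?thesis using qpinf_split[OF q1, of "c*q" N] unfolding eq .
  qed
  have i4: "qpoch_inf (b*c) q = qp q (b*c) N * qpoch_inf (a*b*c/q) q"
  proof -
    have eq: "b * c * q ^ N = a * b * c / q" using aN q0 by simp
    show ?thesis using qpinf_split[OF q1, of "b*c" N] unfolding eq .
  qed
  have nz: "qpoch_inf (a*q) q \<noteq> 0" "qp q (b*q) N \<noteq> 0" "qpoch_inf (a*b) q \<noteq> 0" "qp q (c*q) N \<noteq> 0"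
     "qpoch_inf (a*c) q \<noteq> 0" "qpoch_inf (a*b*c/q) q \<noteq> 0"
    using hinf unfolding i2 i3 by auto
  show ?thesis unfolding i1 i2 i3 i4 using nz by (simp add: field_simps)
qed

lemma prod5_neg: "(- (a ^ k)) * (- (b ^ k)) * (- (c ^ k)) * (- (d ^ k)) * (- (e ^ k)) = - ((a*b*c*d*e::complex) ^ k)"
  by (simp add: power_mult_distrib)

lemma core2:
  fixes q a b c d e :: complex
  assumes q0: "q \<noteq> 0" and q1: "norm q < 1" and aN: "a = q ^ Suc N"
    and nz: "b \<noteq> 0" "c \<noteq> 0" "d \<noteq> 0" "e \<noteq> 0"
    and ha: "\<And>k. qp q a k \<noteq> 0" and hb: "\<And>k. qp q b k \<noteq> 0" and hc: "\<And>k. qp q c k \<noteq> 0"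
    and hd: "\<And>k. qp q d k \<noteq> 0" and he: "\<And>k. qp q e k \<noteq> 0"
    and hdq: "\<And>k. qp q (d*q) k \<noteq> 0" and heq: "\<And>k. qp q (e*q) k \<noteq> 0"
    and h2: "\<And>k. qp q (q^2/(a*b*c)) k \<noteq> 0"
    and hinf: "qpoch_inf (a*q) q * qpoch_inf (b*q) q * qpoch_inf (c*q) q * qpoch_inf (a*b*c/q) q \<noteq> 0"
  shows "(\<Sum>\<^sub>\<infinity>k::int. qpoch (q/a) q k * qpoch (q/b) q k * qpoch (q/c) q k * qpoch (q/d) q k * qpoch (q/e) q k
            / (qpoch (a*q) q k * qpoch (b*q) q k * qpoch (c*q) q k * qpoch (d*q) q k * qpoch (e*q) q k)
            * (a*b*c*d*e / q) powi k)
     = qpoch_inf q q * qpoch_inf (a*b) q * qpoch_inf (b*c) q * qpoch_inf (a*c) q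
       / (qpoch_inf (a*q) q * qpoch_inf (b*q) q * qpoch_inf (c*q) q * qpoch_inf (a*b*c/q) q)
       * (\<Sum>k::nat. qpoch (q/a) q (int k) * qpoch (q/b) q (int k) * qpoch (q/c) q (int k)
                      * qpoch (d*e) q (int k)
            / (qpoch q q (int k) * qpoch (q^2/(a*b*c)) q (int k) * qpoch (d*q) q (int k) * qpoch (e*q) q (int k))
            * q ^ k)"
proof -
  have a0: "a \<noteq> 0" using aN q0 by simp
  have Q: "\<And>n. qp q q n \<noteq> 0" by (rule qp_q_nz[OF q1 q0])
  have n1: "x \<noteq> 1" if "\<And>k. qp q x k \<noteq> 0" for x using qp_nz_at[OF that, of 0] by simp
  have hq: "qp q (x * q) k \<noteq> 0" if "\<And>k. qp q x k \<noteq> 0" for x k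
    using that[of "Suc k"] by (simp add: qp_Suc')
  define z where "z = a*b*c*d*e/q"
  have z0: "z \<noteq> 0" unfolding z_def using a0 nz q0 by simp
  define r where "r m = qp q (q/a) m * qp q (q/b) m * qp q (q/c) m * qp q (q/d) m * qp q (q/e) m
       / (qp q (a*q) m * qp q (b*q) m * qp q (c*q) m * qp q (d*q) m * qp q (e*q) m)" for m
  define f where "f k = qpoch (q/a) q k * qpoch (q/b) q k * qpoch (q/c) q k * qpoch (q/d) q k * qpoch (q/e) q k
            / (qpoch (a*q) q k * qpoch (b*q) q k * qpoch (c*q) q k * qpoch (d*q) q k * qpoch (e*q) q k)
            * (a*b*c*d*e / q) powi k" for k
  have P1: "f (int m) = r m * z ^ m" for m
    unfolding f_def r_def z_def by (simp add: qpoch_nat)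
  have P2: "f (- int (Suc m)) = - (q ^ (2 * m + 1)) * (r m * z ^ m)" for m
  proof -
    have "f (- int (Suc m)) = (qpoch (q/a) q (- int (Suc m)) / qpoch (a*q) q (- int (Suc m)))
        * (qpoch (q/b) q (- int (Suc m)) / qpoch (b*q) q (- int (Suc m)))
        * (qpoch (q/c) q (- int (Suc m)) / qpoch (c*q) q (- int (Suc m)))
        * (qpoch (q/d) q (- int (Suc m)) / qpoch (d*q) q (- int (Suc m)))
        * (qpoch (q/e) q (- int (Suc m)) / qpoch (e*q) q (- int (Suc m))) * inverse (z ^ Suc m)"
      unfolding f_def prod5_div z_def by (simp only: power_int_minus power_int_of_nat)
    also have "\<dots> = (- (a ^ (2 * m + 1)) * qp q (q / a) m / qp q (a * q) m) * (- (b ^ (2 * m + 1)) * qp q (q / b) m / qp q (b * q) m)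
        * (- (c ^ (2 * m + 1)) * qp q (q / c) m / qp q (c * q) m) * (- (d ^ (2 * m + 1)) * qp q (q / d) m / qp q (d * q) m)
        * (- (e ^ (2 * m + 1)) * qp q (q / e) m / qp q (e * q) m) * inverse (z ^ Suc m)"
      by (simp only: neg_ratio2[OF q0 a0 n1[OF ha] hq[OF ha]] neg_ratio2[OF q0 nz(1) n1[OF hb] hq[OF hb]]
          neg_ratio2[OF q0 nz(2) n1[OF hc] hq[OF hc]] neg_ratio2[OF q0 nz(3) n1[OF hd] hdq]
          neg_ratio2[OF q0 nz(4) n1[OF he] heq])
    also have "\<dots> = ((- (a ^ (2 * m + 1))) * (- (b ^ (2 * m + 1))) * (- (c ^ (2 * m + 1))) * (- (d ^ (2 * m + 1))) * (- (e ^ (2 * m + 1))))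
        * r m * inverse (z ^ Suc m)"
      unfolding r_def by (simp add: divide_inverse mult_ac)
    also have "(- (a ^ (2 * m + 1))) * (- (b ^ (2 * m + 1))) * (- (c ^ (2 * m + 1))) * (- (d ^ (2 * m + 1))) * (- (e ^ (2 * m + 1)))
        = - (q ^ (2 * m + 1) * z ^ m * z ^ Suc m)"
    proof -
      have P: "a * b * c * d * e = q * z" unfolding z_def using q0 by simp
      have ee: "2 * m + 1 = m + Suc m" by simp
      have "z ^ (2 * m + 1) = z ^ m * z ^ Suc m" unfolding ee by (rule power_add)
      then show ?thesis unfolding prod5_neg P power_mult_distrib by simp
    qed
    finally show ?thesis using z0 by (simp add: field_simps)
  qed
  have P3: "r m = 0" if "N < m" for m
  proof -
    have "qp q (q/a) m = 0"
      by (rule qp_zero[of _ _ N]) (use aN q0 that in auto)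
    then show ?thesis unfolding r_def by simp
  qed
  define T where "T = int ` {..N} \<union> (\<lambda>m. - int (Suc m)) ` {..N}"
  have fin: "finite T" unfolding T_def by simp
  have "infsum f UNIV = infsum f T"
  proof (rule infsum_cong_neutral)
    fix x assume x: "x \<in> UNIV - T"
    show "f x = 0"
    proof (cases "x \<ge> 0")
      case True
      define m where "m = nat x"
      have m: "x = int m" using True unfolding m_def by simp
      then have "N < m" using x unfolding T_def by (auto simp: not_le)
      then show ?thesis unfolding m P1 P3[OF \<open>N < m\<close>] by simp
    next
      case False
      define m where "m = nat (- x) - 1"
      have m: "x = - int (Suc m)" using False unfolding m_def by simp
      have "N < m"
      proof (rule ccontr)
        assume "\<not> N < m"
        then have "m \<in> {..N}" by simp
        then have "x \<in> T" unfolding T_def m by blast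
        then show False using x by simp
      qed
      then show ?thesis unfolding m P2 P3[OF \<open>N < m\<close>] by simp
    qed
  qed auto
  also have "\<dots> = sum f T" using fin by simp
  also have "\<dots> = (\<Sum>m\<le>N. f (int m)) + (\<Sum>m\<le>N. f (- int (Suc m)))"
  proof -
    have disj: "int ` {..N} \<inter> (\<lambda>m. - int (Suc m)) ` {..N} = {}" by auto
    have "sum f T = sum f (int ` {..N}) + sum f ((\<lambda>m. - int (Suc m)) ` {..N})"
      unfolding T_def by (rule sum.union_disjoint) (use disj in auto)
    also have "sum f (int ` {..N}) = (\<Sum>m\<le>N. f (int m))" by (simp add: sum.reindex)
    also have "sum f ((\<lambda>m. - int (Suc m)) ` {..N}) = (\<Sum>m\<le>N. f (- int (Suc m)))"
      by (subst sum.reindex) (auto simp: inj_on_def)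
    finally show ?thesis .
  qed
  also have "\<dots> = (1 - q) * (\<Sum>m\<le>N. (W q q m / qp q q m) * (r m * z ^ m))"
  proof -
    have q1': "1 - q \<noteq> 0" using qq_nz[OF q1 q0, of 0] by simp
    have "(1 - q) * (\<Sum>m\<le>N. (W q q m / qp q q m) * (r m * z ^ m)) = (\<Sum>m\<le>N. r m * z ^ m - q ^ (2 * m + 1) * (r m * z ^ m))"
      unfolding sum_distrib_left
      by (rule sum.cong[OF refl]) (use q1' in \<open>simp add: Wq_ratio[OF q0 q1] field_simps\<close>)
    then show ?thesis unfolding P1 P2 by (simp add: sum_subtractf sum_negf)
  qed
  also have "\<dots> = (1 - q) * (qp q (q * q) N * qp q (b * c) N / (qp q (b * q) N * qp q (c * q) N)
       * (\<Sum>j\<le>N. qp q (q / a) j * qp q (q / b) j * qp q (q / c) j * qp q (d * e) j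
            / (qp q q j * qp q (d * q) j * qp q (e * q) j * qp q (q^2/(a*b*c)) j) * q ^ j))"
  proof -
    have e2: "q * q / (q / x) = x * q" if "x \<noteq> 0" for x using q0 that by simp
    have e3: "q * q ^ (N + 1) = a * q" using aN by simp
    have e4: "q ^ 2 * q ^ (N + 2) / (q / d * (q / e) * (q / b) * (q / c)) = z"
      unfolding z_def aN using q0 nz by (simp add: field_simps power2_eq_square)
    have e5: "q * q / (q / b * (q / c)) = b * c" using q0 nz by (simp add: field_simps)
    have e6: "q * q / (q / d * (q / e)) = d * e" using q0 nz by (simp add: field_simps)
    have e8: "q / b * (q / c) / (q * q ^ N) = q ^ 2 / (a * b * c)" unfolding aN using q0 nz by (simp add: field_simps power2_eq_square)
    have e9: "1 / q ^ N = q / a" unfolding aN using q0 by simp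
    have hs: "\<And>i. q * q / (q / x) * q ^ i \<noteq> 1" if "x \<noteq> 0" "\<And>k. qp q (x * q) k \<noteq> 0" for x
      unfolding e2[OF that(1)] by (rule qp_nz_at[OF that(2)])
    have GA: "\<And>i. q * q ^ Suc i \<noteq> 1" using qq_nz[OF q1 q0] by (metis power_Suc)
    have hw: "\<And>j. j \<le> N \<Longrightarrow> qp q (q / b * (q / c) / (q * q ^ N)) j \<noteq> 0"
      unfolding e8 by (rule h2)
    have W: "(\<Sum>k\<le>N. W q q k / qp q q k * (qp q (q/d) k * qp q (q/e) k * qp q (q/b) k * qp q (q/c) k * qp q (1 / q ^ N) k)
            / (qp q (q * q / (q/d)) k * qp q (q * q / (q/e)) k * qp q (q * q / (q/b)) k * qp q (q * q / (q/c)) k * qp q (q * q ^ (N + 1)) k)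
            * (q ^ 2 * q ^ (N + 2) / (q/d * (q/e) * (q/b) * (q/c))) ^ k)
     = qp q (q * q) N * qp q (q * q / (q/b * (q/c))) N / (qp q (q * q / (q/b)) N * qp q (q * q / (q/c)) N)
       * (\<Sum>j\<le>N. qp q (1 / q ^ N) j * qp q (q/b) j * qp q (q/c) j * qp q (q * q / (q/d * (q/e))) j
            / (qp q q j * qp q (q * q / (q/d)) j * qp q (q * q / (q/e)) j * qp q (q/b * (q/c) / (q * q ^ N)) j) * q ^ j)"
      by (rule watson[OF q0 Q _ _ _ _ _ GA hs hs hs hs hw]) (use q0 nz hq[OF hb] hq[OF hc] hdq heq in auto)
    have W': "(\<Sum>k\<le>N. W q q k / qp q q k * (qp q (q/d) k * qp q (q/e) k * qp q (q/b) k * qp q (q/c) k * qp q (q / a) k)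
            / (qp q (d * q) k * qp q (e * q) k * qp q (b * q) k * qp q (c * q) k * qp q (a * q) k) * z ^ k)
     = qp q (q * q) N * qp q (b * c) N / (qp q (b * q) N * qp q (c * q) N)
       * (\<Sum>j\<le>N. qp q (q / a) j * qp q (q/b) j * qp q (q/c) j * qp q (d * e) j
            / (qp q q j * qp q (d * q) j * qp q (e * q) j * qp q (q ^ 2 / (a * b * c)) j) * q ^ j)"
      using W unfolding e2[OF nz(1)] e2[OF nz(2)] e2[OF nz(3)] e2[OF nz(4)] e3 e4 e5 e6 e8 e9 .
    show ?thesis unfolding W'[symmetric]
      by (rule arg_cong[where f="\<lambda>x. (1 - q) * x"], rule sum.cong[OF refl]) (simp add: r_def divide_inverse mult_ac)
  qed
  also have "\<dots> = qpoch_inf q q * qpoch_inf (a*b) q * qpoch_inf (b*c) q * qpoch_inf (a*c) q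
       / (qpoch_inf (a*q) q * qpoch_inf (b*q) q * qpoch_inf (c*q) q * qpoch_inf (a*b*c/q) q)
       * (\<Sum>k::nat. qpoch (q/a) q (int k) * qpoch (q/b) q (int k) * qpoch (q/c) q (int k)
                      * qpoch (d*e) q (int k)
            / (qpoch q q (int k) * qpoch (q^2/(a*b*c)) q (int k) * qpoch (d*q) q (int k) * qpoch (e*q) q (int k))
            * q ^ k)"
  proof -
    have "(\<Sum>k::nat. qpoch (q/a) q (int k) * qpoch (q/b) q (int k) * qpoch (q/c) q (int k)
                      * qpoch (d*e) q (int k)
            / (qpoch q q (int k) * qpoch (q^2/(a*b*c)) q (int k) * qpoch (d*q) q (int k) * qpoch (e*q) q (int k))
            * q ^ k)
        = (\<Sum>j\<le>N. qp q (q / a) j * qp q (q / b) j * qp q (q / c) j * qp q (d * e) j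
            / (qp q q j * qp q (d * q) j * qp q (e * q) j * qp q (q^2/(a*b*c)) j) * q ^ j)"
    proof -
      have z: "qp q (q / a) k = 0" if "k \<notin> {..N}" for k
        by (rule qp_zero[of _ _ N]) (use aN q0 that in auto)
      show ?thesis unfolding qpoch_nat
        by (subst suminf_finite[of "{..N}"]) (auto simp: z mult_ac)
    qed
    moreover have "qp q q (Suc N) = (1 - q) * qp q (q * q) N" by (rule qp_Suc')
    ultimately show ?thesis unfolding pref2[OF q1 aN q0 hinf] by (simp add: mult_ac)
  qed
  finally show ?thesis unfolding f_def .
qed

definition Concl :: "complex \<Rightarrow> complex \<Rightarrow> complex \<Rightarrow> complex \<Rightarrow> complex \<Rightarrow> complex \<Rightarrow> bool" where
  "Concl q a b c d e \<longleftrightarrow> ((((\<forall>k::nat. qpoch (q^3/(a*b*c)) q (int k) \<noteq> 0)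
      \<and> qpoch_inf a q * qpoch_inf b q * qpoch_inf c q * qpoch_inf (a*b*c/q^2) q \<noteq> 0
      \<and> (\<lambda>k::int. qpoch (q/a) q k * qpoch (q/b) q k * qpoch (q/c) q k * qpoch (q/d) q k * qpoch (q/e) q k
            / (qpoch a q k * qpoch b q k * qpoch c q k * qpoch d q k * qpoch e q k)
            * (a*b*c*d*e / q^3) powi k) summable_on UNIV)
     \<longrightarrow>
     (\<Sum>\<^sub>\<infinity>k::int. qpoch (q/a) q k * qpoch (q/b) q k * qpoch (q/c) q k * qpoch (q/d) q k * qpoch (q/e) q k
            / (qpoch a q k * qpoch b q k * qpoch c q k * qpoch d q k * qpoch e q k)
            * (a*b*c*d*e / q^3) powi k)
     = qpoch_inf q q * qpoch_inf (a*b/q) q * qpoch_inf (b*c/q) q * qpoch_inf (a*c/q) q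
       / (qpoch_inf a q * qpoch_inf b q * qpoch_inf c q * qpoch_inf (a*b*c/q^2) q)
       * (\<Sum>k::nat. qpoch (q/a) q (int k) * qpoch (q/b) q (int k) * qpoch (q/c) q (int k)
                      * qpoch (d*e/q) q (int k)
            / (qpoch q q (int k) * qpoch (q^3/(a*b*c)) q (int k) * qpoch d q (int k) * qpoch e q (int k))
            * q ^ k))
    \<and>
    (((\<forall>k::nat. qpoch (q^2/(a*b*c)) q (int k) \<noteq> 0 \<and> qpoch (d*q) q (int k) \<noteq> 0
                 \<and> qpoch (e*q) q (int k) \<noteq> 0)
      \<and> qpoch_inf (a*q) q * qpoch_inf (b*q) q * qpoch_inf (c*q) q * qpoch_inf (a*b*c/q) q \<noteq> 0
      \<and> (\<lambda>k::int. qpoch (q/a) q k * qpoch (q/b) q k * qpoch (q/c) q k * qpoch (q/d) q k * qpoch (q/e) q k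
            / (qpoch (a*q) q k * qpoch (b*q) q k * qpoch (c*q) q k * qpoch (d*q) q k * qpoch (e*q) q k)
            * (a*b*c*d*e / q) powi k) summable_on UNIV)
     \<longrightarrow>
     (\<Sum>\<^sub>\<infinity>k::int. qpoch (q/a) q k * qpoch (q/b) q k * qpoch (q/c) q k * qpoch (q/d) q k * qpoch (q/e) q k
            / (qpoch (a*q) q k * qpoch (b*q) q k * qpoch (c*q) q k * qpoch (d*q) q k * qpoch (e*q) q k)
            * (a*b*c*d*e / q) powi k)
     = qpoch_inf q q * qpoch_inf (a*b) q * qpoch_inf (b*c) q * qpoch_inf (a*c) q
       / (qpoch_inf (a*q) q * qpoch_inf (b*q) q * qpoch_inf (c*q) q * qpoch_inf (a*b*c/q) q)
       * (\<Sum>k::nat. qpoch (q/a) q (int k) * qpoch (q/b) q (int k) * qpoch (q/c) q (int k)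
                      * qpoch (d*e) q (int k)
            / (qpoch q q (int k) * qpoch (q^2/(a*b*c)) q (int k) * qpoch (d*q) q (int k) * qpoch (e*q) q (int k))
            * q ^ k)))"

lemma both_core:
  fixes q a b c d e :: complex
  assumes hq: "0 < norm q" "norm q < 1" and aN: "a = q ^ Suc N"
    and hnz: "a \<noteq> 0" "b \<noteq> 0" "c \<noteq> 0" "d \<noteq> 0" "e \<noteq> 0"
    and hwd: "\<forall>k::nat. qpoch a q (int k) \<noteq> 0 \<and> qpoch b q (int k) \<noteq> 0 \<and>
                qpoch c q (int k) \<noteq> 0 \<and> qpoch d q (int k) \<noteq> 0 \<and> qpoch e q (int k) \<noteq> 0"
  shows "Concl q a b c d e"
proof -
  have q0: "q \<noteq> 0" using hq by auto
  have ha: "\<And>k. qp q a k \<noteq> 0" and hb: "\<And>k. qp q b k \<noteq> 0" and hc: "\<And>k. qp q c k \<noteq> 0"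
    and hd: "\<And>k. qp q d k \<noteq> 0" and he: "\<And>k. qp q e k \<noteq> 0"
    using hwd unfolding qpoch_nat by auto
  show ?thesis unfolding Concl_def
  proof (intro conjI impI)
    assume H: "(\<forall>k::nat. qpoch (q^3/(a*b*c)) q (int k) \<noteq> 0)
      \<and> qpoch_inf a q * qpoch_inf b q * qpoch_inf c q * qpoch_inf (a*b*c/q^2) q \<noteq> 0
      \<and> (\<lambda>k::int. qpoch (q/a) q k * qpoch (q/b) q k * qpoch (q/c) q k * qpoch (q/d) q k * qpoch (q/e) q k
            / (qpoch a q k * qpoch b q k * qpoch c q k * qpoch d q k * qpoch e q k)
            * (a*b*c*d*e / q^3) powi k) summable_on UNIV"
    have h3: "\<And>k. qp q (q^3/(a*b*c)) k \<noteq> 0" using H unfolding qpoch_nat by auto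
    have hinf: "qpoch_inf a q * qpoch_inf b q * qpoch_inf c q * qpoch_inf (a*b*c/q^2) q \<noteq> 0" using H by auto
    show "(\<Sum>\<^sub>\<infinity>k::int. qpoch (q/a) q k * qpoch (q/b) q k * qpoch (q/c) q k * qpoch (q/d) q k * qpoch (q/e) q k
            / (qpoch a q k * qpoch b q k * qpoch c q k * qpoch d q k * qpoch e q k)
            * (a*b*c*d*e / q^3) powi k)
     = qpoch_inf q q * qpoch_inf (a*b/q) q * qpoch_inf (b*c/q) q * qpoch_inf (a*c/q) q
       / (qpoch_inf a q * qpoch_inf b q * qpoch_inf c q * qpoch_inf (a*b*c/q^2) q)
       * (\<Sum>k::nat. qpoch (q/a) q (int k) * qpoch (q/b) q (int k) * qpoch (q/c) q (int k)
                      * qpoch (d*e/q) q (int k)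
            / (qpoch q q (int k) * qpoch (q^3/(a*b*c)) q (int k) * qpoch d q (int k) * qpoch e q (int k))
            * q ^ k)"
      by (rule core1[OF q0 hq(2) aN hnz(2-5) ha hb hc hd he h3 hinf])
  next
    assume H: "(\<forall>k::nat. qpoch (q^2/(a*b*c)) q (int k) \<noteq> 0 \<and> qpoch (d*q) q (int k) \<noteq> 0
                 \<and> qpoch (e*q) q (int k) \<noteq> 0)
      \<and> qpoch_inf (a*q) q * qpoch_inf (b*q) q * qpoch_inf (c*q) q * qpoch_inf (a*b*c/q) q \<noteq> 0
      \<and> (\<lambda>k::int. qpoch (q/a) q k * qpoch (q/b) q k * qpoch (q/c) q k * qpoch (q/d) q k * qpoch (q/e) q k
            / (qpoch (a*q) q k * qpoch (b*q) q k * qpoch (c*q) q k * qpoch (d*q) q k * qpoch (e*q) q k)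
            * (a*b*c*d*e / q) powi k) summable_on UNIV"
    have h2: "\<And>k. qp q (q^2/(a*b*c)) k \<noteq> 0" and hdq: "\<And>k. qp q (d*q) k \<noteq> 0" and heq: "\<And>k. qp q (e*q) k \<noteq> 0"
      using H unfolding qpoch_nat by auto
    have hinf: "qpoch_inf (a*q) q * qpoch_inf (b*q) q * qpoch_inf (c*q) q * qpoch_inf (a*b*c/q) q \<noteq> 0" using H by auto
    show "(\<Sum>\<^sub>\<infinity>k::int. qpoch (q/a) q k * qpoch (q/b) q k * qpoch (q/c) q k * qpoch (q/d) q k * qpoch (q/e) q k
            / (qpoch (a*q) q k * qpoch (b*q) q k * qpoch (c*q) q k * qpoch (d*q) q k * qpoch (e*q) q k)
            * (a*b*c*d*e / q) powi k)
     = qpoch_inf q q * qpoch_inf (a*b) q * qpoch_inf (b*c) q * qpoch_inf (a*c) q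
       / (qpoch_inf (a*q) q * qpoch_inf (b*q) q * qpoch_inf (c*q) q * qpoch_inf (a*b*c/q) q)
       * (\<Sum>k::nat. qpoch (q/a) q (int k) * qpoch (q/b) q (int k) * qpoch (q/c) q (int k)
                      * qpoch (d*e) q (int k)
            / (qpoch q q (int k) * qpoch (q^2/(a*b*c)) q (int k) * qpoch (d*q) q (int k) * qpoch (e*q) q (int k))
            * q ^ k)"
      by (rule core2[OF q0 hq(2) aN hnz(2-5) ha hb hc hd he hdq heq h2 hinf])
  qed
qed

lemma Concl_sym1: "Concl q a b c d e = Concl q b a c d e"
  unfolding Concl_def by (simp only: mult_ac)

lemma Concl_sym2: "Concl q a b c d e = Concl q c b a d e"
  unfolding Concl_def by (simp only: mult_ac)

theorem theorem1p1:
  fixes q a b c d e :: complex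
  assumes hq: "0 < norm q" "norm q < 1"
    and hn: "\<exists>n::nat. n \<ge> 1 \<and> (a = q ^ n \<or> b = q ^ n \<or> c = q ^ n)"
    and hnz: "a \<noteq> 0" "b \<noteq> 0" "c \<noteq> 0" "d \<noteq> 0" "e \<noteq> 0"
    and hwd: "\<forall>k::nat. qpoch a q (int k) \<noteq> 0 \<and> qpoch b q (int k) \<noteq> 0 \<and>
                qpoch c q (int k) \<noteq> 0 \<and> qpoch d q (int k) \<noteq> 0 \<and> qpoch e q (int k) \<noteq> 0"
  shows
   "(((\<forall>k::nat. qpoch (q^3/(a*b*c)) q (int k) \<noteq> 0)
      \<and> qpoch_inf a q * qpoch_inf b q * qpoch_inf c q * qpoch_inf (a*b*c/q^2) q \<noteq> 0
      \<and> (\<lambda>k::int. qpoch (q/a) q k * qpoch (q/b) q k * qpoch (q/c) q k * qpoch (q/d) q k * qpoch (q/e) q k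
            / (qpoch a q k * qpoch b q k * qpoch c q k * qpoch d q k * qpoch e q k)
            * (a*b*c*d*e / q^3) powi k) summable_on UNIV)
     \<longrightarrow>
     (\<Sum>\<^sub>\<infinity>k::int. qpoch (q/a) q k * qpoch (q/b) q k * qpoch (q/c) q k * qpoch (q/d) q k * qpoch (q/e) q k
            / (qpoch a q k * qpoch b q k * qpoch c q k * qpoch d q k * qpoch e q k)
            * (a*b*c*d*e / q^3) powi k)
     = qpoch_inf q q * qpoch_inf (a*b/q) q * qpoch_inf (b*c/q) q * qpoch_inf (a*c/q) q
       / (qpoch_inf a q * qpoch_inf b q * qpoch_inf c q * qpoch_inf (a*b*c/q^2) q)
       * (\<Sum>k::nat. qpoch (q/a) q (int k) * qpoch (q/b) q (int k) * qpoch (q/c) q (int k)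
                      * qpoch (d*e/q) q (int k)
            / (qpoch q q (int k) * qpoch (q^3/(a*b*c)) q (int k) * qpoch d q (int k) * qpoch e q (int k))
            * q ^ k))
    \<and>
    (((\<forall>k::nat. qpoch (q^2/(a*b*c)) q (int k) \<noteq> 0 \<and> qpoch (d*q) q (int k) \<noteq> 0
                 \<and> qpoch (e*q) q (int k) \<noteq> 0)
      \<and> qpoch_inf (a*q) q * qpoch_inf (b*q) q * qpoch_inf (c*q) q * qpoch_inf (a*b*c/q) q \<noteq> 0
      \<and> (\<lambda>k::int. qpoch (q/a) q k * qpoch (q/b) q k * qpoch (q/c) q k * qpoch (q/d) q k * qpoch (q/e) q k
            / (qpoch (a*q) q k * qpoch (b*q) q k * qpoch (c*q) q k * qpoch (d*q) q k * qpoch (e*q) q k)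
            * (a*b*c*d*e / q) powi k) summable_on UNIV)
     \<longrightarrow>
     (\<Sum>\<^sub>\<infinity>k::int. qpoch (q/a) q k * qpoch (q/b) q k * qpoch (q/c) q k * qpoch (q/d) q k * qpoch (q/e) q k
            / (qpoch (a*q) q k * qpoch (b*q) q k * qpoch (c*q) q k * qpoch (d*q) q k * qpoch (e*q) q k)
            * (a*b*c*d*e / q) powi k)
     = qpoch_inf q q * qpoch_inf (a*b) q * qpoch_inf (b*c) q * qpoch_inf (a*c) q
       / (qpoch_inf (a*q) q * qpoch_inf (b*q) q * qpoch_inf (c*q) q * qpoch_inf (a*b*c/q) q)
       * (\<Sum>k::nat. qpoch (q/a) q (int k) * qpoch (q/b) q (int k) * qpoch (q/c) q (int k)
                      * qpoch (d*e) q (int k)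
            / (qpoch q q (int k) * qpoch (q^2/(a*b*c)) q (int k) * qpoch (d*q) q (int k) * qpoch (e*q) q (int k))
            * q ^ k))"
proof -
  obtain n :: nat where n1: "n \<ge> 1" and abc: "a = q ^ n \<or> b = q ^ n \<or> c = q ^ n" using hn by blast
  obtain N where nN: "n = Suc N" using n1 by (cases n) auto
  have "Concl q a b c d e"
  proof -
    consider "a = q ^ Suc N" | "b = q ^ Suc N" | "c = q ^ Suc N" using abc nN by blast
    then show ?thesis
    proof cases
      case 1
      then show ?thesis by (rule both_core[OF hq _ hnz hwd])
    next
      case 2
      have "Concl q b a c d e"
        by (rule both_core[OF hq 2]) (use hnz hwd in auto)
      then show ?thesis using Concl_sym1 by blast
    next
      case 3
      have "Concl q c b a d e"
        by (rule both_core[OF hq 3]) (use hnz hwd in auto)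
      then show ?thesis using Concl_sym2 by blast
    qed
  qed
  then show ?thesis unfolding Concl_def .
qed


end
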